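(* Let the setting, algorithm and notation be as described in the context, suppose the constraint qualification holds and the optimization problem has a nonempty solution set. Assume $\tau\in(0,(1+\sqrt5)/2)$ and that for some $\alpha\in(\tau/\min(1+\tau,1+\tau^{-1}),1]$, \[ \widehat\Sigma_f+S\succeq0,\quad H_f\succeq0,\quad \tfrac12\Sigma_f+S+\sigma AA^*\succ0,\quad \tfrac12\widehat\Sigma_g+T\succeq0,\quad M_g\succ0 . \] Then the Majorized iPADMM has a worst-case $O(1/k)$ ergodic iteration-complexity, in the following sense: there is a constant $D\ge0$ independent of $k$ such that for every $k\ge2$, the ergodic point $\hat w^k:=(\hat x^k,\hat y^k,\hat z^k)$ satisfies \[ \big(p(\hat x^k)+q(\hat y^k)\big)-\big(p(x)+q(y)\big)+\langle\hat x^k-x,\nabla f(x)+Az\rangle+\langle\hat y^k-y,\nabla g(y)+Bz\rangle+\langle\hat z^k-z,-(A^*x+B^*y-c)\rangle\le\frac{D}{2k} \] for all $w=(x,y,z)\in\mathcal X\times\mathcal Y\times\mathcal Z$ with $\|w-\hat w^k\|\le1$; i.e. $\hat w^k$ is an $O(1/k)$-approximate solution of the associated variational inequality.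
   Context: Let $\mathcal X,\mathcal Y,\mathcal Z$ be finite-dimensional real Euclidean spaces with inner products $\langle\cdot,\cdot\rangle$ and induced norms $\|\cdot\|$; on $\mathcal X\times\mathcal Y\times\mathcal Z$ use the product Euclidean norm. Let $p:\mathcal X\to(-\infty,+\infty]$ and $q:\mathcal Y\to(-\infty,+\infty]$ be closed proper convex functions, and let $f:\mathcal X\to\mathbb R$, $g:\mathcal Y\to\mathbb R$ be convex differentiable functions with Lipschitz continuous gradients. Let $A:\mathcal Z\to\mathcal X$, $B:\mathcal Z\to\mathcal Y$ be linear maps with adjoints $A^*,B^*$, and $c\in\mathcal Z$. The optimization problem is $\min_{x,y}\{p(x)+f(x)+q(y)+g(y): A^*x+B^*y=c\}$. Constraint qualification: there is $(x_0,y_0)\in\mathrm{ri}(\mathrm{dom}(p)\times\mathrm{dom}(q))$ with $A^*x_0+B^*y_0=c$. Let $\Sigma_f,\widehat\Sigma_f$ (on $\mathcal X$) and $\Sigma_g,\widehat\Sigma_g$ (on $\mathcal Y$) be self-adjoint positive semidefinite linear operators with $\widehat\Sigma_f\succeq\Sigma_f$, $\widehat\Sigma_g\succeq\Sigma_g$, such that for all $x,x'\in\mathcal X$, $y,y'\in\mathcal Y$: $f(x')+\langle x-x',\nabla f(x')\rangle+\frac12\|x-x'\|^2_{\Sigma_f}\le f(x)\le f(x')+\langle x-x',\nabla f(x')\rangle+\frac12\|x-x'\|^2_{\widehat\Sigma_f}$ and the analogous two inequalities for $g$ with $\Sigma_g,\widehat\Sigma_g$. For a self-adjoint (possibly indefinite)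 operator $G$, $\|u\|_G^2:=\langle u,Gu\rangle$. Algorithm (Majorized iPADMM): let $\sigma>0$, $\tau>0$, and let $S:\mathcal X\to\mathcal X$, $T:\mathcal Y\to\mathcal Y$ be self-adjoint, possibly indefinite, linear operators with $\widehat\Sigma_f+S+\sigma AA^*\succeq0$ and $\widehat\Sigma_g+T+\sigma BB^*\succeq0$. Starting from $(x^0,y^0,z^0)\in\mathrm{dom}(p)\times\mathrm{dom}(q)\times\mathcal Z$, for $k=0,1,\dots$: $x^{k+1}\in\arg\min_{x}\{p(x)+\langle\nabla f(x^k),x\rangle+\frac12\|x-x^k\|^2_{\widehat\Sigma_f+S}+\langle z^k,A^*x\rangle+\frac\sigma2\|A^*x+B^*y^k-c\|^2\}$, $y^{k+1}\in\arg\min_{y}\{q(y)+\langle\nabla g(y^k),y\rangle+\frac12\|y-y^k\|^2_{\widehat\Sigma_g+T}+\langle z^k,B^*y\rangle+\frac\sigma2\|A^*x^{k+1}+B^*y-c\|^2\}$, $z^{k+1}=z^k+\tau\sigma(A^*x^{k+1}+B^*y^{k+1}-c)$ (the minimizers are assumed to exist). Notation: $\tilde z^{i+1}:=z^i+\sigma(A^*x^{i+1}+B^*y^{i+1}-c)$; ergodic averages $\hat x^k:=\frac1k\sum_{i=1}^k x^{i+1}$, $\hat y^k:=\frac1k\sum_{i=1}^k y^{i+1}$, $\hat z^k:=\frac1k\sum_{i=1}^k\tilde z^{i+1}$; for $\alpha\in(0,1]$, $H_f:=\frac12\Sigma_f+S+\frac12(1-\alpha)\sigma AA^*$ and $M_g:=\frac12\Sigma_g+T+\min(\tau,1+\tau-\tau^2)\alpha\sigma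 BB^*$. *)

theory Defs
  imports "HOL-Analysis.Analysis" "HOL-Library.Extended_Real"
begin

definition epigraph_e :: "('a::real_normed_vector \<Rightarrow> ereal) \<Rightarrow> ('a \<times> real) set" where
  "epigraph_e p = {(x, t). p x \<le> ereal t}"

definition edom :: "('a \<Rightarrow> ereal) \<Rightarrow> 'a set" where
  "edom p = {x. p x < \<infinity>}"

definition closed_proper_convex :: "('a::real_normed_vector \<Rightarrow> ereal) \<Rightarrow> bool" where
  "closed_proper_convex p \<longleftrightarrow>
     closed (epigraph_e p) \<and> convex (epigraph_e p) \<and>
     (\<forall>x. p x \<noteq> -\<infinity>) \<and> (\<exists>x. p x \<noteq> \<infinity>)"

definition self_adjoint_op :: "('a::real_inner \<Rightarrow> 'a) \<Rightarrow> bool" where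
  "self_adjoint_op G \<longleftrightarrow> linear G \<and> (\<forall>u v. G u \<bullet> v = u \<bullet> G v)"

definition qnorm :: "('a::real_inner \<Rightarrow> 'a) \<Rightarrow> 'a \<Rightarrow> real" where
  "qnorm G u = u \<bullet> G u"

definition psd_op :: "('a::real_inner \<Rightarrow> 'a) \<Rightarrow> bool" where
  "psd_op G \<longleftrightarrow> (\<forall>u. 0 \<le> qnorm G u)"

definition pd_op :: "('a::real_inner \<Rightarrow> 'a) \<Rightarrow> bool" where
  "pd_op G \<longleftrightarrow> (\<forall>u. u \<noteq> 0 \<longrightarrow> 0 < qnorm G u)"

end

theory Submission
  imports Defs
begin


lemma sa_linear: "self_adjoint_op G \<Longrightarrow> linear G" by (simp add: self_adjoint_op_def)
lemma sa_sym: "self_adjoint_op G \<Longrightarrow> G u \<bullet> v = u \<bullet> G v" by (simp add: self_adjoint_op_def)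

lemma qnorm_add:
  assumes "self_adjoint_op G"
  shows "qnorm G (a + b) = qnorm G a + 2 * (a \<bullet> G b) + qnorm G b"
proof -
  have l: "linear G" using assms sa_linear by blast
  have s: "b \<bullet> G a = a \<bullet> G b" using sa_sym[OF assms, of b a] by (simp add: inner_commute)
  show ?thesis using s by (simp add: qnorm_def linear_add[OF l] inner_add_left inner_add_right)
qed

lemma qnorm_diff:
  assumes "self_adjoint_op G"
  shows "qnorm G (a - b) = qnorm G a - 2 * (a \<bullet> G b) + qnorm G b"
proof -
  have l: "linear G" using assms sa_linear by blast
  have s: "b \<bullet> G a = a \<bullet> G b" using sa_sym[OF assms, of b a] by (simp add: inner_commute)
  show ?thesis using s by (simp add: qnorm_def linear_diff[OF l] inner_diff_left inner_diff_right)
qed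

lemma qnorm_scale:
  assumes "linear G"
  shows "qnorm G (t *\<^sub>R a) = t\<^sup>2 * qnorm G a"
  by (simp add: qnorm_def linear_scale[OF assms] power2_eq_square)

lemma qnorm_minus:
  assumes "linear G"
  shows "qnorm G (- a) = qnorm G a"
  by (simp add: qnorm_def linear_neg[OF assms])

lemma qnorm_op_add: "qnorm (\<lambda>u. F u + H u) d = qnorm F d + qnorm H d"
  by (simp add: qnorm_def inner_add_right)

lemma qnorm_op_scale: "qnorm (\<lambda>u. c *\<^sub>R F u) d = c * qnorm F d"
  by (simp add: qnorm_def)

lemma qnorm_op_diff: "qnorm (\<lambda>u. F u - H u) d = qnorm F d - qnorm H d"
  by (simp add: qnorm_def inner_diff_right)

lemma qnorm_three:
  assumes "self_adjoint_op G"
  shows "a \<bullet> G b = (qnorm G (a + b) - qnorm G a - qnorm G b) / 2"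
  using qnorm_add[OF assms, of a b] by simp

lemma qnorm_psd_half:
  assumes "self_adjoint_op G" "psd_op G"
  shows "qnorm G (a + b) / 2 \<le> qnorm G a + qnorm G b"
proof -
  have "qnorm G (a - b) \<ge> 0" using assms(2) psd_op_def by blast
  then show ?thesis using qnorm_add[OF assms(1), of a b] qnorm_diff[OF assms(1), of a b] by simp
qed

lemma sa_add: "self_adjoint_op F \<Longrightarrow> self_adjoint_op H \<Longrightarrow> self_adjoint_op (\<lambda>u. F u + H u)"
  unfolding self_adjoint_op_def by (auto simp: linear_compose_add inner_add_left inner_add_right)

lemma norm_sq_add: "(norm (a + b))\<^sup>2 = (norm a)\<^sup>2 + 2 * (a \<bullet> b) + (norm (b::'a::real_inner))\<^sup>2"
  by (simp add: power2_norm_eq_inner inner_add_left inner_add_right inner_commute)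

lemma norm_sq_diff: "(norm (a - b))\<^sup>2 = (norm a)\<^sup>2 - 2 * (a \<bullet> b) + (norm (b::'a::real_inner))\<^sup>2"
  by (simp add: power2_norm_eq_inner inner_diff_left inner_diff_right inner_commute)

lemma norm_sq_diff_le: "(norm (a - b))\<^sup>2 \<le> 2 * (norm a)\<^sup>2 + 2 * (norm (b::'a::real_inner))\<^sup>2"
proof -
  have "0 \<le> (norm (a + b))\<^sup>2" by simp
  then show ?thesis using norm_sq_add[of a b] norm_sq_diff[of a b] by linarith
qed

lemma cross_identity:
  fixes u v s t c :: "'a::real_inner"
  shows "2 * ((u - v) \<bullet> (s - t)) = (norm (u + s - c))\<^sup>2 - (norm (u + t - c))\<^sup>2 - (norm (v + s - c))\<^sup>2 + (norm (v + t - c))\<^sup>2"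
  by (simp add: power2_norm_eq_inner inner_diff_left inner_diff_right inner_add_left inner_add_right inner_commute algebra_simps)

lemma small_t:
  fixes c M :: real
  assumes "\<And>t. 0 < t \<Longrightarrow> t \<le> 1 \<Longrightarrow> - (t * M) \<le> c"
  shows "0 \<le> c"
proof (rule ccontr)
  assume "\<not> 0 \<le> c"
  hence c: "c < 0" by simp
  define K where "K = \<bar>M\<bar> + 1"
  have K: "0 < K" "M \<le> K" by (auto simp: K_def)
  define t where "t = min 1 (- c / (2 * K))"
  have tp: "0 < t" using c K by (simp add: t_def divide_neg_pos)
  have t1: "t \<le> 1" by (simp add: t_def)
  have "t \<le> - c / (2 * K)" by (simp add: t_def)
  hence "t * (2 * K) \<le> - c / (2 * K) * (2 * K)" using K by (intro mult_right_mono) auto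
  hence "t * (2 * K) \<le> - c" using K by simp
  moreover have "t * M \<le> t * K" using tp K by (simp add: mult_left_mono)
  moreover have "0 < t * K" using tp K by simp
  ultimately show False using assms[OF tp t1] by linarith
qed



lemma cpc_finite:
  assumes "closed_proper_convex p" "x \<in> edom p"
  shows "p x = ereal (real_of_ereal (p x))"
proof -
  have "p x \<noteq> -\<infinity>" using assms(1) by (simp add: closed_proper_convex_def)
  moreover have "p x \<noteq> \<infinity>" using assms(2) by (simp add: edom_def)
  ultimately show ?thesis by (cases "p x") auto
qed

lemma cpc_not_minf: "closed_proper_convex p \<Longrightarrow> p x \<noteq> -\<infinity>"
  by (simp add: closed_proper_convex_def)

lemma cpc_comb:
  assumes "closed_proper_convex p" "x \<in> edom p" "y \<in> edom p" "0 \<le> u" "0 \<le> v" "u + v = 1"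
  shows "u *\<^sub>R x + v *\<^sub>R y \<in> edom p \<and>
         real_of_ereal (p (u *\<^sub>R x + v *\<^sub>R y)) \<le> u * real_of_ereal (p x) + v * real_of_ereal (p y)"
proof -
  let ?P = "\<lambda>x. real_of_ereal (p x)"
  have cv: "convex (epigraph_e p)" using assms(1) by (simp add: closed_proper_convex_def)
  have ex: "(x, ?P x) \<in> epigraph_e p" using cpc_finite[OF assms(1,2)] by (simp add: epigraph_e_def)
  have ey: "(y, ?P y) \<in> epigraph_e p" using cpc_finite[OF assms(1,3)] by (simp add: epigraph_e_def)
  have "u *\<^sub>R (x, ?P x) + v *\<^sub>R (y, ?P y) \<in> epigraph_e p"
    using convexD[OF cv ex ey assms(4-6)] .
  hence le: "p (u *\<^sub>R x + v *\<^sub>R y) \<le> ereal (u * ?P x + v * ?P y)" by (simp add: epigraph_e_def)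
  have nm: "p (u *\<^sub>R x + v *\<^sub>R y) \<noteq> -\<infinity>" using cpc_not_minf[OF assms(1)] .
  show ?thesis
  proof
    show "u *\<^sub>R x + v *\<^sub>R y \<in> edom p" using le by (auto simp: edom_def intro: le_less_trans)
    show "?P (u *\<^sub>R x + v *\<^sub>R y) \<le> u * ?P x + v * ?P y"
      using le nm by (cases "p (u *\<^sub>R x + v *\<^sub>R y)") auto
  qed
qed

lemma cpc_convex:
  assumes "closed_proper_convex p"
  shows "convex (edom p)" "convex_on (edom p) (\<lambda>x. real_of_ereal (p x))"
proof -
  show c: "convex (edom p)" using cpc_comb[OF assms] by (intro convexI) blast
  show "convex_on (edom p) (\<lambda>x. real_of_ereal (p x))"
    unfolding convex_on_def using c cpc_comb[OF assms] by blast
qed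

lemma vi_from_min:
  fixes P h :: "'a::real_vector \<Rightarrow> real"
  assumes D: "convex_on D P" "x1 \<in> D" "u \<in> D"
  and h: "\<And>t. 0 < t \<Longrightarrow> t \<le> 1 \<Longrightarrow> h (x1 + t *\<^sub>R (u - x1)) \<le> h x1 + t * L + t\<^sup>2 * M"
  and mn: "\<And>v. v \<in> D \<Longrightarrow> P x1 + h x1 \<le> P v + h v"
  shows "0 \<le> P u - P x1 + L"
proof (rule small_t[of M])
  fix t :: real assume t: "0 < t" "t \<le> 1"
  have cD: "convex D" using D(1) by (simp add: convex_on_def)
  have eq: "x1 + t *\<^sub>R (u - x1) = (1 - t) *\<^sub>R x1 + t *\<^sub>R u" by (simp add: algebra_simps)
  have inD: "x1 + t *\<^sub>R (u - x1) \<in> D" unfolding eq using t D(2,3) cD by (intro convexD) auto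
  have Pv: "P (x1 + t *\<^sub>R (u - x1)) \<le> (1 - t) * P x1 + t * P u"
    unfolding eq using convex_onD[OF D(1)] t D(2,3) by auto
  have "P x1 + h x1 \<le> (1 - t) * P x1 + t * P u + (h x1 + t * L + t\<^sup>2 * M)"
    using mn[OF inD] Pv h[OF t] by linarith
  hence "0 \<le> t * (P u - P x1 + L + t * M)" by (simp add: algebra_simps power2_eq_square)
  hence "0 \<le> P u - P x1 + L + t * M" using t by (simp add: zero_le_mult_iff)
  thus "- (t * M) \<le> P u - P x1 + L" by simp
qed

lemma quad_expand:
  assumes G: "self_adjoint_op G" and L: "linear At"
  shows "g \<bullet> (x1 + t *\<^sub>R d) + qnorm G (x1 + t *\<^sub>R d - x0) / 2 + z \<bullet> At (x1 + t *\<^sub>R d)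
          + \<sigma> / 2 * (norm (At (x1 + t *\<^sub>R d) + b - c))\<^sup>2
     = (g \<bullet> x1 + qnorm G (x1 - x0) / 2 + z \<bullet> At x1 + \<sigma> / 2 * (norm (At x1 + b - c))\<^sup>2)
       + t * (g \<bullet> d + (x1 - x0) \<bullet> G d + z \<bullet> At d + \<sigma> * ((At x1 + b - c) \<bullet> At d))
       + t\<^sup>2 * (qnorm G d / 2 + \<sigma> / 2 * (norm (At d))\<^sup>2)"
proof -
  have e1: "x1 + t *\<^sub>R d - x0 = (x1 - x0) + t *\<^sub>R d" by (simp add: algebra_simps)
  have e2: "At (x1 + t *\<^sub>R d) + b - c = (At x1 + b - c) + t *\<^sub>R At d"
    by (simp add: linear_add[OF L] linear_scale[OF L] algebra_simps)
  have q: "qnorm G (x1 + t *\<^sub>R d - x0) = qnorm G (x1 - x0) + 2 * t * ((x1 - x0) \<bullet> G d) + t\<^sup>2 * qnorm G d"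
    unfolding e1 qnorm_add[OF G] qnorm_scale[OF sa_linear[OF G]]
    using sa_linear[OF G] by (simp add: linear_scale)
  have n: "(norm (At (x1 + t *\<^sub>R d) + b - c))\<^sup>2 = (norm (At x1 + b - c))\<^sup>2 + 2 * t * ((At x1 + b - c) \<bullet> At d) + t\<^sup>2 * (norm (At d))\<^sup>2"
    unfolding e2 norm_sq_add by (simp add: power_mult_distrib)
  show ?thesis unfolding q n by (simp add: linear_add[OF L] linear_scale[OF L] inner_add_right algebra_simps power2_eq_square field_simps)
qed




lemma relint_zero:
  fixes L :: "'x::euclidean_space \<Rightarrow> real"
  assumes ri: "w0 \<in> rel_interior D" and nn: "\<And>w. w \<in> D \<Longrightarrow> 0 \<le> L w + k"
    and z: "L w0 + k = 0" and lin: "linear L" and w: "w \<in> D"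
  shows "L w + k = 0"
proof -
  obtain e where e: "e > 0" "ball w0 e \<inter> affine hull D \<subseteq> D"
    using ri by (auto simp: mem_rel_interior_ball)
  have w0D: "w0 \<in> D" using ri rel_interior_subset by blast
  define N where "N = norm (w - w0) + 1"
  have N: "N > 0" by (simp add: N_def add_nonneg_pos)
  define \<delta> where "\<delta> = e / 2 / N"
  have dp: "\<delta> > 0" using e N by (simp add: \<delta>_def)
  have "\<delta> * norm (w - w0) < e"
  proof -
    have "\<delta> * norm (w - w0) \<le> \<delta> * N" using dp by (simp add: N_def)
    also have "\<dots> = e / 2" using N by (simp add: \<delta>_def)
    finally show ?thesis using e by simp
  qed
  define pt where "pt = w0 - \<delta> *\<^sub>R (w - w0)"
  have "pt \<in> ball w0 e" using \<open>\<delta> * norm (w - w0) < e\<close> dp by (simp add: pt_def dist_norm)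
  moreover have "pt \<in> affine hull D"
  proof -
    have "pt = (1 + \<delta>) *\<^sub>R w0 + (- \<delta>) *\<^sub>R w" by (simp add: pt_def algebra_simps)
    moreover have "(1 + \<delta>) *\<^sub>R w0 + (- \<delta>) *\<^sub>R w \<in> affine hull D"
      by (rule mem_affine[OF affine_affine_hull]) (use w0D w hull_subset[of D affine] in auto)
    ultimately show ?thesis by simp
  qed
  ultimately have "pt \<in> D" using e by blast
  hence ptn: "0 \<le> L pt + k" by (rule nn)
  have "L pt = L w0 - \<delta> * (L w - L w0)"
    by (simp add: pt_def linear_diff[OF lin] linear_scale[OF lin])
  moreover have "L w0 = - k" using z by simp
  ultimately have "L pt + k = - \<delta> * (L w + k)" by (simp add: algebra_simps)
  with ptn have "L w + k \<le> 0" using dp by (simp add: mult_le_0_iff) 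
  thus ?thesis using nn[OF w] by simp
qed



lemma final_comb:
  fixes Gap Tx Ty Cx Zt GA GB GC GD W1 W2 \<sigma> nr1 na N1 N0 \<alpha> nr0 m nb ib1 \<tau> ib0 GE GF icv :: real
  assumes h1: "Gap \<le> Tx + Ty + Cx + Zt"
  and h2: "Tx \<le> (GA - GB) / 2 + W1"
  and h3: "Ty \<le> (GC - GD) / 2 + W2"
  and h4: "Cx = \<sigma> / 2 * (nr1 - na - N1 + N0)"
  and h5: "W1 \<le> (1 - \<alpha>) * \<sigma> / 2 * (na + nr0)"
  and h6: "W2 \<le> m * \<alpha> * \<sigma> / 2 * nb"
  and h7: "na = nr1 - 2 * ib1 + nb"
  and h8: "\<sigma> * ib1 + (\<tau> - 1) * \<sigma> * ib0 \<le> (GE - GF) / 2"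
  and h9: "(\<tau> - 2 * \<alpha>) * nr0 - 2 * \<alpha> * (\<tau> - 1) * ib0 - \<alpha> * (1 - m) * nb \<le> 0"
  and h10: "Zt = icv + (\<tau> * \<sigma> / 2 - \<sigma>) * nr1"
  and s: "\<sigma> > 0" and a: "\<alpha> \<ge> 0"
  shows "Gap \<le> icv + (GA - GB) / 2 + (GC - GD) / 2 + \<sigma> / 2 * (N0 - N1)
           + ((\<alpha> + 1 - \<tau>) * \<sigma> / 2) * (nr0 - nr1) + \<alpha> / 2 * (GE - GF)"
proof -
  have a8: "\<alpha> * (\<sigma> * ib1 + (\<tau> - 1) * \<sigma> * ib0) \<le> \<alpha> * ((GE - GF) / 2)"
    using h8 a by (rule mult_left_mono)
  have a9: "(\<sigma> / 2) * ((\<tau> - 2 * \<alpha>) * nr0 - 2 * \<alpha> * (\<tau> - 1) * ib0 - \<alpha> * (1 - m) * nb) \<le> (\<sigma> / 2) * 0"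
    using h9 s by (intro mult_left_mono) auto
  have E4: "Cx = \<sigma>*nr1/2 - \<sigma>*na/2 - \<sigma>*N1/2 + \<sigma>*N0/2" using h4 by (simp add: field_simps)
  have E5: "W1 \<le> \<sigma>*na/2 - \<alpha>*\<sigma>*na/2 + \<sigma>*nr0/2 - \<alpha>*\<sigma>*nr0/2" using h5 by (simp add: field_simps)
  have E6: "W2 \<le> m*\<alpha>*\<sigma>*nb/2" using h6 by (simp add: field_simps)
  have E7a: "\<sigma>*na = \<sigma>*nr1 - 2*(\<sigma>*ib1) + \<sigma>*nb" unfolding h7 by (simp add: field_simps)
  have E7b: "\<alpha>*\<sigma>*na = \<alpha>*\<sigma>*nr1 - 2*(\<alpha>*\<sigma>*ib1) + \<alpha>*\<sigma>*nb" unfolding h7 by (simp add: field_simps)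
  have E8: "\<alpha>*\<sigma>*ib1 + \<alpha>*\<tau>*\<sigma>*ib0 - \<alpha>*\<sigma>*ib0 \<le> \<alpha>*GE/2 - \<alpha>*GF/2" using a8 by (simp add: field_simps)
  have E9: "\<tau>*\<sigma>*nr0/2 - \<alpha>*\<sigma>*nr0 - \<alpha>*\<tau>*\<sigma>*ib0 + \<alpha>*\<sigma>*ib0 - \<alpha>*\<sigma>*nb/2 + m*\<alpha>*\<sigma>*nb/2 \<le> 0"
    using a9 by (simp add: field_simps)
  have E10: "Zt = icv + \<tau>*\<sigma>*nr1/2 - \<sigma>*nr1" using h10 by (simp add: field_simps)
  have G: "icv + (GA - GB) / 2 + (GC - GD) / 2 + \<sigma> / 2 * (N0 - N1)
           + ((\<alpha> + 1 - \<tau>) * \<sigma> / 2) * (nr0 - nr1) + \<alpha> / 2 * (GE - GF)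
    = icv + GA/2 - GB/2 + GC/2 - GD/2 + \<sigma>*N0/2 - \<sigma>*N1/2 + \<alpha>*\<sigma>*nr0/2 + \<sigma>*nr0/2 - \<tau>*\<sigma>*nr0/2
      - \<alpha>*\<sigma>*nr1/2 - \<sigma>*nr1/2 + \<tau>*\<sigma>*nr1/2 + \<alpha>*GE/2 - \<alpha>*GF/2" by (simp add: field_simps)
  show ?thesis unfolding G using h1 h2 h3 E4 E5 E6 E7a E7b E8 E9 E10 by argo
qed


locale admm =
  fixes p :: "'a::euclidean_space \<Rightarrow> ereal" and q :: "'b::euclidean_space \<Rightarrow> ereal"
    and f :: "'a \<Rightarrow> real" and g :: "'b \<Rightarrow> real"
    and gf :: "'a \<Rightarrow> 'a" and gg :: "'b \<Rightarrow> 'b"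
    and A :: "'c::euclidean_space \<Rightarrow> 'a" and B :: "'c \<Rightarrow> 'b" and c :: 'c
    and Sf Sfh S :: "'a \<Rightarrow> 'a" and Sg Sgh T :: "'b \<Rightarrow> 'b"
    and \<sigma> \<tau> \<alpha> :: real
    and x :: "nat \<Rightarrow> 'a" and y :: "nat \<Rightarrow> 'b" and z :: "nat \<Rightarrow> 'c"
  assumes p: "closed_proper_convex p" and q: "closed_proper_convex q"
    and f_cvx: "convex_on UNIV f" and f_grad: "\<And>u. (f has_derivative (\<lambda>h. gf u \<bullet> h)) (at u)"
    and f_lip: "\<exists>L. \<forall>u v. norm (gf u - gf v) \<le> L * norm (u - v)"
    and g_cvx: "convex_on UNIV g" and g_grad: "\<And>u. (g has_derivative (\<lambda>h. gg u \<bullet> h)) (at u)"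
    and g_lip: "\<exists>L. \<forall>u v. norm (gg u - gg v) \<le> L * norm (u - v)"
    and linA: "linear A" and linB: "linear B"
    and CQ: "\<exists>x0 y0. (x0, y0) \<in> rel_interior (edom p \<times> edom q) \<and> adjoint A x0 + adjoint B y0 = c"
    and sol: "\<exists>xs ys. adjoint A xs + adjoint B ys = c \<and>
               (\<forall>x' y'. adjoint A x' + adjoint B y' = c \<longrightarrow>
                  p xs + ereal (f xs) + q ys + ereal (g ys) \<le> p x' + ereal (f x') + q y' + ereal (g y'))"
    and ops: "self_adjoint_op Sf" "self_adjoint_op Sfh" "self_adjoint_op Sg" "self_adjoint_op Sgh"
             "self_adjoint_op S" "self_adjoint_op T"
    and Sig_psd: "psd_op Sf" "psd_op Sg" "psd_op (\<lambda>u. Sfh u - Sf u)" "psd_op (\<lambda>u. Sgh u - Sg u)"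
    and f_maj: "\<And>u v. f v + (u - v) \<bullet> gf v + qnorm Sf (u - v) / 2 \<le> f u"
               "\<And>u v. f u \<le> f v + (u - v) \<bullet> gf v + qnorm Sfh (u - v) / 2"
    and g_maj: "\<And>u v. g v + (u - v) \<bullet> gg v + qnorm Sg (u - v) / 2 \<le> g u"
               "\<And>u v. g u \<le> g v + (u - v) \<bullet> gg v + qnorm Sgh (u - v) / 2"
    and sigma: "\<sigma> > 0" and tau_pos: "\<tau> > 0"
    and alg_psd: "psd_op (\<lambda>u. Sfh u + S u + \<sigma> *\<^sub>R A (adjoint A u))"
                 "psd_op (\<lambda>u. Sgh u + T u + \<sigma> *\<^sub>R B (adjoint B u))"
    and init: "x 0 \<in> edom p" "y 0 \<in> edom q"
    and xstep: "\<And>k u.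
      p (x (Suc k)) + ereal (gf (x k) \<bullet> x (Suc k) + qnorm (\<lambda>v. Sfh v + S v) (x (Suc k) - x k) / 2
        + z k \<bullet> adjoint A (x (Suc k)) + \<sigma> / 2 * (norm (adjoint A (x (Suc k)) + adjoint B (y k) - c))\<^sup>2)
      \<le> p u + ereal (gf (x k) \<bullet> u + qnorm (\<lambda>v. Sfh v + S v) (u - x k) / 2
        + z k \<bullet> adjoint A u + \<sigma> / 2 * (norm (adjoint A u + adjoint B (y k) - c))\<^sup>2)"
    and ystep: "\<And>k v.
      q (y (Suc k)) + ereal (gg (y k) \<bullet> y (Suc k) + qnorm (\<lambda>w. Sgh w + T w) (y (Suc k) - y k) / 2
        + z k \<bullet> adjoint B (y (Suc k)) + \<sigma> / 2 * (norm (adjoint A (x (Suc k)) + adjoint B (y (Suc k)) - c))\<^sup>2)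
      \<le> q v + ereal (gg (y k) \<bullet> v + qnorm (\<lambda>w. Sgh w + T w) (v - y k) / 2
        + z k \<bullet> adjoint B v + \<sigma> / 2 * (norm (adjoint A (x (Suc k)) + adjoint B v - c))\<^sup>2)"
    and zstep: "\<And>k. z (Suc k) = z k + (\<tau> * \<sigma>) *\<^sub>R (adjoint A (x (Suc k)) + adjoint B (y (Suc k)) - c)"
    and tau_ub: "\<tau> < (1 + sqrt 5) / 2"
    and alpha: "\<tau> / min (1 + \<tau>) (1 + 1 / \<tau>) < \<alpha>" "\<alpha> \<le> 1"
    and c1: "psd_op (\<lambda>u. Sfh u + S u)"
    and c2: "psd_op (\<lambda>u. (1/2) *\<^sub>R Sf u + S u + ((1 - \<alpha>) * \<sigma> / 2) *\<^sub>R A (adjoint A u))"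
    and c3: "pd_op (\<lambda>u. (1/2) *\<^sub>R Sf u + S u + \<sigma> *\<^sub>R A (adjoint A u))"
    and c4: "psd_op (\<lambda>v. (1/2) *\<^sub>R Sgh v + T v)"
    and c5: "pd_op (\<lambda>v. (1/2) *\<^sub>R Sg v + T v + (min \<tau> (1 + \<tau> - \<tau>\<^sup>2) * \<alpha> * \<sigma>) *\<^sub>R B (adjoint B v))"

begin

abbreviation "At \<equiv> adjoint A"
abbreviation "Bt \<equiv> adjoint B"
abbreviation "Gf \<equiv> (\<lambda>v. Sfh v + S v)"
abbreviation "Gg \<equiv> (\<lambda>w. Sgh w + T w)"
definition "P u = real_of_ereal (p u)"
definition "Q v = real_of_ereal (q v)"
definition "r k = At (x k) + Bt (y k) - c"

lemma linAt: "linear At" using linA by (rule adjoint_linear)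
lemma linBt: "linear Bt" using linB by (rule adjoint_linear)
lemma Gf_sa: "self_adjoint_op Gf" using ops by (intro sa_add)
lemma Gg_sa: "self_adjoint_op Gg" using ops by (intro sa_add)

lemma convP: "convex_on (edom p) P" using cpc_convex(2)[OF p] unfolding P_def[abs_def] .
lemma convQ: "convex_on (edom q) Q" using cpc_convex(2)[OF q] unfolding Q_def[abs_def] .
lemma pP: "u \<in> edom p \<Longrightarrow> p u = ereal (P u)" unfolding P_def using cpc_finite[OF p] .
lemma qQ: "u \<in> edom q \<Longrightarrow> q u = ereal (Q u)" unfolding Q_def using cpc_finite[OF q] .

lemma ereal_le_fin:
  assumes "a + ereal s \<le> b + ereal t" "b \<noteq> \<infinity>" "a \<noteq> -\<infinity>"
  shows "a \<noteq> \<infinity>"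
  using assms by (cases a; cases b) auto

lemma x_dom: "x k \<in> edom p"
proof (cases k)
  case 0 thus ?thesis using init by simp
next
  case (Suc j)
  have "x 0 \<in> edom p" using init by simp
  hence "p (x 0) \<noteq> \<infinity>" by (simp add: edom_def)
  hence "p (x (Suc j)) \<noteq> \<infinity>" using ereal_le_fin[OF xstep[of j "x 0"]] cpc_not_minf[OF p] by blast
  thus ?thesis using Suc by (simp add: edom_def less_top)
qed

lemma y_dom: "y k \<in> edom q"
proof (cases k)
  case 0 thus ?thesis using init by simp
next
  case (Suc j)
  have "y 0 \<in> edom q" using init by simp
  hence "q (y 0) \<noteq> \<infinity>" by (simp add: edom_def)
  hence "q (y (Suc j)) \<noteq> \<infinity>" using ereal_le_fin[OF ystep[of j "y 0"]] cpc_not_minf[OF q] by blast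
  thus ?thesis using Suc by (simp add: edom_def less_top)
qed

lemma xVI:
  assumes u: "u \<in> edom p"
  shows "0 \<le> P u - P (x (Suc k)) + (gf (x k) \<bullet> (u - x (Suc k)) + (x (Suc k) - x k) \<bullet> Gf (u - x (Suc k))
      + z k \<bullet> At (u - x (Suc k)) + \<sigma> * ((At (x (Suc k)) + Bt (y k) - c) \<bullet> At (u - x (Suc k))))"
proof -
  define h where "h v = gf (x k) \<bullet> v + qnorm Gf (v - x k) / 2 + z k \<bullet> At v + \<sigma> / 2 * (norm (At v + Bt (y k) - c))\<^sup>2" for v
  have mn: "P (x (Suc k)) + h (x (Suc k)) \<le> P v + h v" if "v \<in> edom p" for v
    using xstep[of k v] pP[OF x_dom[of "Suc k"]] pP[OF that] unfolding h_def by simp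
  show ?thesis
    apply (rule vi_from_min[OF convP x_dom u, where h = h and M = "qnorm Gf (u - x (Suc k)) / 2 + \<sigma> / 2 * (norm (At (u - x (Suc k))))\<^sup>2"])
     apply (simp only: h_def quad_expand[OF Gf_sa linAt])
    apply (rule mn, assumption)
    done
qed

lemma yVI:
  assumes u: "u \<in> edom q"
  shows "0 \<le> Q u - Q (y (Suc k)) + (gg (y k) \<bullet> (u - y (Suc k)) + (y (Suc k) - y k) \<bullet> Gg (u - y (Suc k))
      + z k \<bullet> Bt (u - y (Suc k)) + \<sigma> * ((Bt (y (Suc k)) + At (x (Suc k)) - c) \<bullet> Bt (u - y (Suc k))))"
proof -
  define h where "h v = gg (y k) \<bullet> v + qnorm Gg (v - y k) / 2 + z k \<bullet> Bt v + \<sigma> / 2 * (norm (Bt v + At (x (Suc k)) - c))\<^sup>2" for v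
  have cm: "At (x (Suc k)) + Bt v - c = Bt v + At (x (Suc k)) - c" for v by (simp add: algebra_simps)
  have mn: "Q (y (Suc k)) + h (y (Suc k)) \<le> Q v + h v" if "v \<in> edom q" for v
    using ystep[of k v] qQ[OF y_dom[of "Suc k"]] qQ[OF that] unfolding h_def cm by simp
  show ?thesis
    apply (rule vi_from_min[OF convQ y_dom u, where h = h and M = "qnorm Gg (u - y (Suc k)) / 2 + \<sigma> / 2 * (norm (Bt (u - y (Suc k))))\<^sup>2"])
     apply (simp only: h_def quad_expand[OF Gg_sa linBt])
    apply (rule mn, assumption)
    done
qed



lemma lagrange:
  obtains xs ys zs where "xs \<in> edom p" "ys \<in> edom q" "At xs + Bt ys = c"
    "\<And>u v. u \<in> edom p \<Longrightarrow> v \<in> edom q \<Longrightarrow>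
       P xs + Q ys + f xs + g ys \<le> P u + Q v + f u + g v + zs \<bullet> (At u + Bt v - c)"
proof -
  obtain x0 y0 where ri: "(x0, y0) \<in> rel_interior (edom p \<times> edom q)" and f0: "At x0 + Bt y0 = c"
    using CQ by blast
  have x0: "x0 \<in> edom p" and y0: "y0 \<in> edom q" using rel_interior_subset ri by blast+
  obtain xs ys where fs: "At xs + Bt ys = c" and
    opt: "\<And>x' y'. At x' + Bt y' = c \<Longrightarrow>
       p xs + ereal (f xs) + q ys + ereal (g ys) \<le> p x' + ereal (f x') + q y' + ereal (g y')"
    using sol by blast
  have xs: "xs \<in> edom p" and ys: "ys \<in> edom q"
  proof -
    have le: "p xs + ereal (f xs) + q ys + ereal (g ys) \<le> ereal (P x0) + ereal (f x0) + ereal (Q y0) + ereal (g y0)"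
      using opt[OF f0] pP[OF x0] qQ[OF y0] by simp
    have a: "p xs \<noteq> -\<infinity>" "q ys \<noteq> -\<infinity>" using cpc_not_minf[OF p] cpc_not_minf[OF q] by auto
    have "p xs \<noteq> \<infinity> \<and> q ys \<noteq> \<infinity>" using le a by (cases "p xs"; cases "q ys") auto
    thus "xs \<in> edom p" "ys \<in> edom q" by (auto simp: edom_def less_top)
  qed
  define Fs where "Fs = P xs + Q ys + f xs + g ys"
  have optr: "Fs \<le> P u + Q v + f u + g v" if "u \<in> edom p" "v \<in> edom q" "At u + Bt v = c" for u v
    using opt[OF that(3)] pP[OF xs] qQ[OF ys] pP[OF that(1)] qQ[OF that(2)] by (simp add: Fs_def)
  define K where "K = {(At u + Bt v - c, t) | u v t. u \<in> edom p \<and> v \<in> edom q \<and> P u + Q v + f u + g v - Fs < t}"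
  have cvx: "convex K"
  proof (rule convexI)
    fix k1 k2 :: "'c \<times> real" and a b :: real
    assume k1: "k1 \<in> K" and k2: "k2 \<in> K" and ab: "0 \<le> a" "0 \<le> b" "a + b = 1"
    obtain u1 v1 t1 where w1: "k1 = (At u1 + Bt v1 - c, t1)" "u1 \<in> edom p" "v1 \<in> edom q" "P u1 + Q v1 + f u1 + g v1 - Fs < t1"
      using k1 by (auto simp: K_def)
    obtain u2 v2 t2 where w2: "k2 = (At u2 + Bt v2 - c, t2)" "u2 \<in> edom p" "v2 \<in> edom q" "P u2 + Q v2 + f u2 + g v2 - Fs < t2"
      using k2 by (auto simp: K_def)
    define u where "u = a *\<^sub>R u1 + b *\<^sub>R u2"
    define v where "v = a *\<^sub>R v1 + b *\<^sub>R v2"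
    have cdp: "convex (edom p)" "convex (edom q)" using convP convQ by (auto simp: convex_on_def)
    have ud: "u \<in> edom p" unfolding u_def using convexD[OF cdp(1) w1(2) w2(2) ab] .
    have vd: "v \<in> edom q" unfolding v_def using convexD[OF cdp(2) w1(3) w2(3) ab] .
    have Pu: "P u \<le> a * P u1 + b * P u2" using convP w1(2) w2(2) ab unfolding u_def convex_on_def by blast
    have Qv: "Q v \<le> a * Q v1 + b * Q v2" using convQ w1(3) w2(3) ab unfolding v_def convex_on_def by blast
    have fu: "f u \<le> a * f u1 + b * f u2" using f_cvx ab unfolding u_def convex_on_def by blast
    have gv: "g v \<le> a * g v1 + b * g v2" using g_cvx ab unfolding v_def convex_on_def by blast
    have lin: "a *\<^sub>R (At u1 + Bt v1 - c) + b *\<^sub>R (At u2 + Bt v2 - c) = At u + Bt v - c"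
    proof -
      have "a *\<^sub>R (At u1 + Bt v1 - c) + b *\<^sub>R (At u2 + Bt v2 - c)
          = (a *\<^sub>R At u1 + b *\<^sub>R At u2) + (a *\<^sub>R Bt v1 + b *\<^sub>R Bt v2) - (a + b) *\<^sub>R c"
        by (simp add: algebra_simps)
      thus ?thesis using ab(3) by (simp add: u_def v_def linear_add[OF linAt] linear_add[OF linBt] linear_scale[OF linAt] linear_scale[OF linBt])
    qed
    have tt: "P u + Q v + f u + g v - Fs < a * t1 + b * t2"
    proof -
      have "a * (P u1 + Q v1 + f u1 + g v1 - Fs) \<le> a * t1" using w1(4) ab by (simp add: mult_left_mono)
      moreover have "b * (P u2 + Q v2 + f u2 + g v2 - Fs) \<le> b * t2" using w2(4) ab by (simp add: mult_left_mono)
      moreover have "a * t1 + b * t2 > a * (P u1 + Q v1 + f u1 + g v1 - Fs) + b * (P u2 + Q v2 + f u2 + g v2 - Fs)"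
      proof (cases "a = 0")
        case True thus ?thesis using ab w2(4) by simp
      next
        case False hence "a > 0" using ab by simp
        hence "a * (P u1 + Q v1 + f u1 + g v1 - Fs) < a * t1" using w1(4) by simp
        thus ?thesis using \<open>b * (P u2 + Q v2 + f u2 + g v2 - Fs) \<le> b * t2\<close> by linarith
      qed
      moreover have "a * (P u1 + Q v1 + f u1 + g v1 - Fs) + b * (P u2 + Q v2 + f u2 + g v2 - Fs)
           = (a * P u1 + b * P u2) + (a * Q v1 + b * Q v2) + (a * f u1 + b * f u2) + (a * g v1 + b * g v2) - (a + b) * Fs"
        by (simp add: algebra_simps)
      moreover have "(a + b) * Fs = Fs" using ab(3) by simp
      ultimately show ?thesis using Pu Qv fu gv by linarith
    qed
    have "a *\<^sub>R k1 + b *\<^sub>R k2 = (At u + Bt v - c, a * t1 + b * t2)"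
      using lin by (simp add: w1(1) w2(1))
    thus "a *\<^sub>R k1 + b *\<^sub>R k2 \<in> K" using ud vd tt by (auto simp: K_def)
  qed
  have inK: "(At u + Bt v - c, t) \<in> K" if "u \<in> edom p" "v \<in> edom q" "P u + Q v + f u + g v - Fs < t" for u v t
    using that by (auto simp: K_def)
  have ne: "K \<noteq> {}" using inK[OF xs ys, of 1] by (auto simp: Fs_def)
  have n0: "0 \<notin> K"
  proof
    assume "0 \<in> K"
    then obtain u v t where "(0::'c \<times> real) = (At u + Bt v - c, t)" "u \<in> edom p" "v \<in> edom q" "P u + Q v + f u + g v - Fs < t"
      by (auto simp: K_def)
    thus False using optr[of u v] by (auto simp: zero_prod_def)
  qed
  obtain a where aspan: "a \<in> span K" and an0: "a \<noteq> 0" and asep: "\<And>k. k \<in> K \<Longrightarrow> 0 \<le> a \<bullet> k"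
    using separating_hyperplane_set_0_inspan[OF cvx ne n0] by blast
  define lam where "lam = fst a"
  define mu where "mu = snd a"
  have sep: "0 \<le> lam \<bullet> (At u + Bt v - c) + mu * t" if "u \<in> edom p" "v \<in> edom q" "P u + Q v + f u + g v - Fs < t" for u v t
    using asep[OF inK[OF that]] by (simp add: inner_prod_def lam_def mu_def)
  have mu0: "0 \<le> mu" using sep[OF xs ys, of 1] fs by (simp add: Fs_def)
  show ?thesis
  proof (cases "mu = 0")
    case True
    have nn: "0 \<le> lam \<bullet> (At u + Bt v - c)" if "u \<in> edom p" "v \<in> edom q" for u v
      using sep[OF that, of "P u + Q v + f u + g v - Fs + 1"] True by simp
    define L where "L w = lam \<bullet> (At (fst w) + Bt (snd w))" for w :: "'a \<times> 'b"
    have linL: "linear L"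
      unfolding L_def by (rule linearI) (simp_all add: linear_add[OF linAt] linear_add[OF linBt]
          linear_scale[OF linAt] linear_scale[OF linBt] inner_add_right algebra_simps)
    have zero: "lam \<bullet> (At u + Bt v - c) = 0" if "u \<in> edom p" "v \<in> edom q" for u v
    proof -
      have "L (u, v) + (- (lam \<bullet> c)) = 0"
      proof (rule relint_zero[OF ri _ _ linL])
        show "0 \<le> L w + - (lam \<bullet> c)" if "w \<in> edom p \<times> edom q" for w
          using nn[of "fst w" "snd w"] that by (auto simp: L_def inner_diff_right mem_Times_iff)
        show "L (x0, y0) + - (lam \<bullet> c) = 0" using f0 by (simp add: L_def)
        show "(u, v) \<in> edom p \<times> edom q" using that by simp
      qed
      thus ?thesis by (simp add: L_def inner_diff_right)
    qed
    have "lam \<in> span (fst ` K)" using aspan span_linear_image[OF linear_fst, of K] by (auto simp: lam_def)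
    moreover have "orthogonal lam k" if "k \<in> fst ` K" for k
      using that zero by (auto simp: K_def orthogonal_def)
    ultimately have "orthogonal lam lam" by (rule orthogonal_to_span)
    hence "lam = 0" by (simp add: orthogonal_def)
    hence "a = 0" using True by (simp add: lam_def mu_def prod_eq_iff)
    thus ?thesis using an0 by simp
  next
    case False
    hence mup: "mu > 0" using mu0 by simp
    define zs where "zs = (1 / mu) *\<^sub>R lam"
    show ?thesis
    proof (rule that[OF xs ys fs])
      fix u v assume uv: "u \<in> edom p" "v \<in> edom q"
      have "P u + Q v + f u + g v - Fs + zs \<bullet> (At u + Bt v - c) \<ge> - e" if "e > 0" for e
      proof -
        have "0 \<le> lam \<bullet> (At u + Bt v - c) + mu * (P u + Q v + f u + g v - Fs + e)"
          using sep[OF uv, of "P u + Q v + f u + g v - Fs + e"] that by simp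
        hence "0 \<le> (lam \<bullet> (At u + Bt v - c) + mu * (P u + Q v + f u + g v - Fs + e)) / mu"
          using mup by simp
        also have "\<dots> = zs \<bullet> (At u + Bt v - c) + (P u + Q v + f u + g v - Fs) + e"
          using mup by (simp add: zs_def field_simps)
        finally show ?thesis by simp
      qed
      note h = this
      have "0 \<le> P u + Q v + f u + g v - Fs + zs \<bullet> (At u + Bt v - c)"
      proof (rule field_le_epsilon)
        fix e :: real assume "0 < e"
        thus "0 \<le> P u + Q v + f u + g v - Fs + zs \<bullet> (At u + Bt v - c) + e" using h[of e] by simp
      qed
      thus "P xs + Q ys + f xs + g ys \<le> P u + Q v + f u + g v + zs \<bullet> (At u + Bt v - c)"
        by (simp add: Fs_def)
    qed
  qed
qed

lemma kkt:
  obtains xs ys zs where "xs \<in> edom p" "ys \<in> edom q" "At xs + Bt ys = c"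
    "\<And>u. u \<in> edom p \<Longrightarrow> 0 \<le> P u - P xs + (gf xs \<bullet> (u - xs) + zs \<bullet> At (u - xs))"
    "\<And>v. v \<in> edom q \<Longrightarrow> 0 \<le> Q v - Q ys + (gg ys \<bullet> (v - ys) + zs \<bullet> Bt (v - ys))"
proof -
  obtain xs ys zs where xs: "xs \<in> edom p" and ys: "ys \<in> edom q" and fs: "At xs + Bt ys = c"
    and L: "\<And>u v. u \<in> edom p \<Longrightarrow> v \<in> edom q \<Longrightarrow>
       P xs + Q ys + f xs + g ys \<le> P u + Q v + f u + g v + zs \<bullet> (At u + Bt v - c)"
    using lagrange by blast
  show ?thesis
  proof (rule that[OF xs ys fs])
    fix u assume u: "u \<in> edom p"
    show "0 \<le> P u - P xs + (gf xs \<bullet> (u - xs) + zs \<bullet> At (u - xs))"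
    proof (rule vi_from_min[OF convP xs u, where h = "\<lambda>w. f w + zs \<bullet> At w" and M = "qnorm Sfh (u - xs) / 2"])
      fix t :: real assume t: "0 < t" "t \<le> 1"
      have "f (xs + t *\<^sub>R (u - xs)) \<le> f xs + (t *\<^sub>R (u - xs)) \<bullet> gf xs + qnorm Sfh (t *\<^sub>R (u - xs)) / 2"
        using f_maj(2)[of "xs + t *\<^sub>R (u - xs)" xs] by simp
      also have "\<dots> = f xs + t * (gf xs \<bullet> (u - xs)) + t\<^sup>2 * (qnorm Sfh (u - xs) / 2)"
        using qnorm_scale[OF sa_linear[OF ops(2)]] by (simp add: inner_commute)
      finally have fb: "f (xs + t *\<^sub>R (u - xs)) \<le> f xs + t * (gf xs \<bullet> (u - xs)) + t\<^sup>2 * (qnorm Sfh (u - xs) / 2)" .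
      have "zs \<bullet> At (xs + t *\<^sub>R (u - xs)) = zs \<bullet> At xs + t * (zs \<bullet> At (u - xs))"
        by (simp add: linear_add[OF linAt] linear_scale[OF linAt] inner_add_right)
      thus "f (xs + t *\<^sub>R (u - xs)) + zs \<bullet> At (xs + t *\<^sub>R (u - xs))
          \<le> f xs + zs \<bullet> At xs + t * (gf xs \<bullet> (u - xs) + zs \<bullet> At (u - xs)) + t\<^sup>2 * (qnorm Sfh (u - xs) / 2)"
        using fb by (simp add: algebra_simps)
    next
      fix w assume w: "w \<in> edom p"
      have "zs \<bullet> (At w + Bt ys - c) = zs \<bullet> At w - zs \<bullet> At xs"
      proof -
        have e: "At w + Bt ys - c = At w - At xs" by (subst fs[symmetric]) (simp add: algebra_simps)
        show ?thesis unfolding e by (simp only: inner_diff_right)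
      qed
      thus "P xs + (f xs + zs \<bullet> At xs) \<le> P w + (f w + zs \<bullet> At w)" using L[OF w ys] by simp
    qed
  next
    fix v assume v: "v \<in> edom q"
    show "0 \<le> Q v - Q ys + (gg ys \<bullet> (v - ys) + zs \<bullet> Bt (v - ys))"
    proof (rule vi_from_min[OF convQ ys v, where h = "\<lambda>w. g w + zs \<bullet> Bt w" and M = "qnorm Sgh (v - ys) / 2"])
      fix t :: real assume t: "0 < t" "t \<le> 1"
      have "g (ys + t *\<^sub>R (v - ys)) \<le> g ys + (t *\<^sub>R (v - ys)) \<bullet> gg ys + qnorm Sgh (t *\<^sub>R (v - ys)) / 2"
        using g_maj(2)[of "ys + t *\<^sub>R (v - ys)" ys] by simp
      also have "\<dots> = g ys + t * (gg ys \<bullet> (v - ys)) + t\<^sup>2 * (qnorm Sgh (v - ys) / 2)"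
        using qnorm_scale[OF sa_linear[OF ops(4)]] by (simp add: inner_commute)
      finally have gb: "g (ys + t *\<^sub>R (v - ys)) \<le> g ys + t * (gg ys \<bullet> (v - ys)) + t\<^sup>2 * (qnorm Sgh (v - ys) / 2)" .
      have "zs \<bullet> Bt (ys + t *\<^sub>R (v - ys)) = zs \<bullet> Bt ys + t * (zs \<bullet> Bt (v - ys))"
        by (simp add: linear_add[OF linBt] linear_scale[OF linBt] inner_add_right)
      thus "g (ys + t *\<^sub>R (v - ys)) + zs \<bullet> Bt (ys + t *\<^sub>R (v - ys))
          \<le> g ys + zs \<bullet> Bt ys + t * (gg ys \<bullet> (v - ys) + zs \<bullet> Bt (v - ys)) + t\<^sup>2 * (qnorm Sgh (v - ys) / 2)"
        using gb by (simp add: algebra_simps)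
    next
      fix w assume w: "w \<in> edom q"
      have "zs \<bullet> (At xs + Bt w - c) = zs \<bullet> Bt w - zs \<bullet> Bt ys"
      proof -
        have e: "At xs + Bt w - c = Bt w - Bt ys" by (subst fs[symmetric]) (simp add: algebra_simps)
        show ?thesis unfolding e by (simp only: inner_diff_right)
      qed
      thus "Q ys + (g ys + zs \<bullet> Bt ys) \<le> Q w + (g w + zs \<bullet> Bt w)" using L[OF xs w] by simp
    qed
  qed
qed


end



lemma pd_nonneg: "pd_op G \<Longrightarrow> 0 \<le> qnorm G u"
  by (cases "u = 0") (auto simp: pd_op_def qnorm_def intro: less_imp_le)

context admm begin

definition "mm = min \<tau> (1 + \<tau> - \<tau>\<^sup>2)"
definition "gam = (\<alpha> + 1 - \<tau>) * \<sigma> / 2"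

lemma params:
  shows "0 < \<alpha>" "0 < 2 * \<alpha> - \<tau>" "(\<alpha> * (\<tau> - 1))\<^sup>2 \<le> (2 * \<alpha> - \<tau>) * (\<alpha> * (1 - mm))"
    "0 \<le> gam" "mm * \<alpha> \<le> 1" "mm \<le> 1"
proof -
  have t: "0 < \<tau>" using tau_pos .
  show ap: "0 < \<alpha>"
  proof -
    have "0 < 1 / \<tau>" using t by simp
    hence "0 < min (1 + \<tau>) (1 + 1 / \<tau>)" using t by (simp add: add_pos_pos)
    hence "0 < \<tau> / min (1 + \<tau>) (1 + 1 / \<tau>)" using t by simp
    thus ?thesis using alpha(1) by linarith
  qed
  have main: "0 < 2 * \<alpha> - \<tau> \<and> (\<alpha> * (\<tau> - 1))\<^sup>2 \<le> (2 * \<alpha> - \<tau>) * (\<alpha> * (1 - mm)) \<and> 0 \<le> \<alpha> + 1 - \<tau> \<and> mm \<le> 1"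
  proof (cases "\<tau> \<le> 1")
    case True
    have "1 / \<tau> \<ge> 1" using t True by simp
    hence mn: "min (1 + \<tau>) (1 + 1 / \<tau>) = 1 + \<tau>" using True by simp
    have "\<tau> < \<alpha> * (1 + \<tau>)" using alpha(1) t unfolding mn by (simp add: divide_less_eq mult.commute)
    moreover have "\<tau>\<^sup>2 \<le> 1" using True t by (simp add: power_le_one)
    hence m: "mm = \<tau>" by (simp add: mm_def)
    have e: "(2 * \<alpha> - \<tau>) * (\<alpha> * (1 - mm)) - (\<alpha> * (\<tau> - 1))\<^sup>2 = \<alpha> * (1 - \<tau>) * (\<alpha> + \<alpha> * \<tau> - \<tau>)"
      unfolding m by (simp add: algebra_simps power2_eq_square)
    have "0 \<le> \<alpha> * (1 - \<tau>) * (\<alpha> + \<alpha> * \<tau> - \<tau>)"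
      using ap True \<open>\<tau> < \<alpha> * (1 + \<tau>)\<close> by (intro mult_nonneg_nonneg) (auto simp: algebra_simps)
    moreover have "0 < 2 * \<alpha> - \<tau>"
    proof -
      have "\<alpha> * \<tau> \<le> \<alpha>" using ap True by (simp add: mult_left_le)
      thus ?thesis using \<open>\<tau> < \<alpha> * (1 + \<tau>)\<close> by (simp add: algebra_simps)
    qed
    ultimately show ?thesis using e True m by simp
  next
    case False
    hence t1: "\<tau> > 1" by simp
    have "1 / \<tau> < 1" using t1 by simp
    hence "\<not> (1 + \<tau> \<le> 1 + 1 / \<tau>)" using t1 by linarith
    hence mn: "min (1 + \<tau>) (1 + 1 / \<tau>) = 1 + 1 / \<tau>" unfolding min_def by simp
    have "1 + 1 / \<tau> = (\<tau> + 1) / \<tau>" using t by (simp add: field_simps)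
    hence "\<tau> / min (1 + \<tau>) (1 + 1 / \<tau>) = \<tau>\<^sup>2 / (\<tau> + 1)" unfolding mn using t by (simp add: power2_eq_square)
    hence "\<tau>\<^sup>2 < \<alpha> * (\<tau> + 1)" using alpha(1) t by (simp add: divide_less_eq mult.commute)
    have "\<tau> < \<tau>\<^sup>2" using t1 by (simp add: power2_eq_square)
    have "1 < \<tau>\<^sup>2" using less_1_mult[OF t1 t1] by (simp add: power2_eq_square)
    hence "\<not> \<tau> \<le> 1 + \<tau> - \<tau>\<^sup>2" by linarith
    hence m: "mm = 1 + \<tau> - \<tau>\<^sup>2" by (simp add: mm_def min_def)
    have e: "(2 * \<alpha> - \<tau>) * (\<alpha> * (1 - mm)) - (\<alpha> * (\<tau> - 1))\<^sup>2 = \<alpha> * (\<tau> - 1) * (\<alpha> * \<tau> + \<alpha> - \<tau>\<^sup>2)"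
      unfolding m by (simp add: algebra_simps power2_eq_square)
    have "0 \<le> \<alpha> * (\<tau> - 1) * (\<alpha> * \<tau> + \<alpha> - \<tau>\<^sup>2)"
      using ap t1 \<open>\<tau>\<^sup>2 < \<alpha> * (\<tau> + 1)\<close> by (intro mult_nonneg_nonneg) (auto simp: algebra_simps)
    moreover have "0 < 2 * \<alpha> - \<tau>"
    proof -
      have "\<tau> * (\<tau> + 1) \<le> 2 * \<tau>\<^sup>2" using t1 by (simp add: power2_eq_square algebra_simps)
      hence "\<tau> * (\<tau> + 1) < (2 * \<alpha>) * (\<tau> + 1)" using \<open>\<tau>\<^sup>2 < \<alpha> * (\<tau> + 1)\<close> by (simp add: algebra_simps)
      thus ?thesis using t by (simp add: mult_less_cancel_right)
    qed
    moreover have "0 \<le> \<alpha> + 1 - \<tau>"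
    proof -
      have "(\<tau> - 1) * (\<tau> + 1) \<le> \<tau>\<^sup>2" by (simp add: power2_eq_square algebra_simps)
      hence "(\<tau> - 1) * (\<tau> + 1) < \<alpha> * (\<tau> + 1)" using \<open>\<tau>\<^sup>2 < \<alpha> * (\<tau> + 1)\<close> by simp
      hence "\<tau> - 1 < \<alpha>" using t by (simp add: mult_less_cancel_right)
      thus ?thesis by simp
    qed
    moreover have "mm \<le> 1" using m t1 \<open>\<tau> < \<tau>\<^sup>2\<close> by simp
    ultimately show ?thesis using e by simp
  qed
  thus "0 < 2 * \<alpha> - \<tau>" "(\<alpha> * (\<tau> - 1))\<^sup>2 \<le> (2 * \<alpha> - \<tau>) * (\<alpha> * (1 - mm))" "mm \<le> 1" by auto
  show "0 \<le> gam" using main sigma by (simp add: gam_def)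
  show "mm * \<alpha> \<le> 1"
  proof (cases "mm \<le> 0")
    case True thus ?thesis using ap by (smt (verit) mult_nonpos_nonneg)
  next
    case False thus ?thesis using main ap alpha(2) by (smt (verit) mult_le_one)
  qed
qed

lemma coco:
  "(gg a - gg b) \<bullet> (s - (a - b)) \<le> qnorm Sgh s / 4"
proof -
  define h where "h = (- 1/2) *\<^sub>R s"
  define h' where "h' = (1/2) *\<^sub>R s"
  have Sg0: "0 \<le> qnorm Sg d" for d using Sig_psd(2) psd_op_def by blast
  have i1: "g b + (a + h - b) \<bullet> gg b \<le> g (a + h)" using g_maj(1)[of b "a + h"] Sg0[of "a + h - b"] by linarith
  have i2: "g (a + h) \<le> g a + h \<bullet> gg a + qnorm Sgh h / 2" using g_maj(2)[of "a + h" a] by simp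
  have i3: "g a + (b + h' - a) \<bullet> gg a \<le> g (b + h')" using g_maj(1)[of a "b + h'"] Sg0[of "b + h' - a"] by linarith
  have i4: "g (b + h') \<le> g b + h' \<bullet> gg b + qnorm Sgh h' / 2" using g_maj(2)[of "b + h'" b] by simp
  have lS: "linear Sgh" using ops(4) sa_linear by blast
  have q1: "qnorm Sgh h = qnorm Sgh s / 4" unfolding h_def qnorm_scale[OF lS] by (simp add: power2_eq_square)
  have q2: "qnorm Sgh h' = qnorm Sgh s / 4" unfolding h'_def qnorm_scale[OF lS] by (simp add: power2_eq_square)
  have "(gg a - gg b) \<bullet> (s - (a - b)) =
      - (h \<bullet> gg a - (a + h - b) \<bullet> gg b + h' \<bullet> gg b - (b + h' - a) \<bullet> gg a)"
    by (simp add: h_def h'_def inner_simps algebra_simps inner_commute)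
  thus ?thesis using i1 i2 i3 i4 q1 q2 by linarith
qed


definition "zt k = z k + \<sigma> *\<^sub>R r (Suc k)"

definition "Gap k u v w = P (x (Suc k)) + Q (y (Suc k)) - P u - Q v + (x (Suc k) - u) \<bullet> (gf u + A w)
   + (y (Suc k) - v) \<bullet> (gg v + B w) + (zt k - w) \<bullet> (- (At u + Bt v - c))"

definition "Psi j u v w = (norm (z (Suc j) - w))\<^sup>2 / (2 * \<tau> * \<sigma>) + qnorm Gf (u - x (Suc j)) / 2
   + qnorm Gg (v - y (Suc j)) / 2 + \<sigma> / 2 * (norm (At u + Bt (y (Suc j)) - c))\<^sup>2
   + gam * (norm (r (Suc j)))\<^sup>2 + \<alpha> / 2 * qnorm Gg (y (Suc j) - y j)"

lemma adjA: "A w \<bullet> d = w \<bullet> At d" using adjoint_works[OF linA, of w d] by (simp add: inner_commute)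
lemma adjB: "B w \<bullet> d = w \<bullet> Bt d" using adjoint_works[OF linB, of w d] by (simp add: inner_commute)

lemma qnA: "d \<bullet> A (At d) = (norm (At d))\<^sup>2"
  using adjA[of "At d" d] by (simp add: inner_commute power2_norm_eq_inner)
lemma qnB: "d \<bullet> B (Bt d) = (norm (Bt d))\<^sup>2"
  using adjB[of "Bt d" d] by (simp add: inner_commute power2_norm_eq_inner)

lemma fx_bound:
  "gf X0 \<bullet> (u - X1) \<le> (u - X1) \<bullet> gf u - qnorm Sf (X1 - u) / 2 - qnorm Sf (u - X0) / 2 + qnorm Sfh (X1 - X0) / 2"
proof -
  have i1: "f X1 \<le> f X0 + (X1 - X0) \<bullet> gf X0 + qnorm Sfh (X1 - X0) / 2" using f_maj(2)[of X1 X0] .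
  have i2: "f X0 + (u - X0) \<bullet> gf X0 + qnorm Sf (u - X0) / 2 \<le> f u" using f_maj(1)[of X0 u] .
  have i3: "f u + (X1 - u) \<bullet> gf u + qnorm Sf (X1 - u) / 2 \<le> f X1" using f_maj(1)[of u X1] .
  have e1: "gf X0 \<bullet> (u - X1) = (u - X0) \<bullet> gf X0 - (X1 - X0) \<bullet> gf X0" by (simp add: inner_simps inner_commute)
  have e2: "(X1 - u) \<bullet> gf u = - ((u - X1) \<bullet> gf u)" by (simp add: inner_simps)
  show ?thesis using i1 i2 i3 e1 e2 by linarith
qed

lemma gy_bound:
  "gg Y0 \<bullet> (v - Y1) \<le> (v - Y1) \<bullet> gg v - qnorm Sg (Y1 - v) / 2 - qnorm Sg (v - Y0) / 2 + qnorm Sgh (Y1 - Y0) / 2"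
proof -
  have i1: "g Y1 \<le> g Y0 + (Y1 - Y0) \<bullet> gg Y0 + qnorm Sgh (Y1 - Y0) / 2" using g_maj(2)[of Y1 Y0] .
  have i2: "g Y0 + (v - Y0) \<bullet> gg Y0 + qnorm Sg (v - Y0) / 2 \<le> g v" using g_maj(1)[of Y0 v] .
  have i3: "g v + (Y1 - v) \<bullet> gg v + qnorm Sg (Y1 - v) / 2 \<le> g Y1" using g_maj(1)[of v Y1] .
  have e1: "gg Y0 \<bullet> (v - Y1) = (v - Y0) \<bullet> gg Y0 - (Y1 - Y0) \<bullet> gg Y0" by (simp add: inner_simps inner_commute)
  have e2: "(Y1 - v) \<bullet> gg v = - ((v - Y1) \<bullet> gg v)" by (simp add: inner_simps)
  show ?thesis using i1 i2 i3 e1 e2 by linarith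
qed


lemma step:
  assumes u: "u \<in> edom p" and v: "v \<in> edom q"
  shows "Gap (Suc j) u v w \<le> Psi j u v w - Psi (Suc j) u v w"
proof -
  define X0 where "X0 = x (Suc j)"
  define X1 where "X1 = x (Suc (Suc j))"
  define Ym where "Ym = y j"
  define Y0 where "Y0 = y (Suc j)"
  define Y1 where "Y1 = y (Suc (Suc j))"
  define Zm where "Zm = z j"
  define Z0 where "Z0 = z (Suc j)"
  define Z1 where "Z1 = z (Suc (Suc j))"
  define r0 where "r0 = At X0 + Bt Y0 - c"
  define r1 where "r1 = At X1 + Bt Y1 - c"
  define a where "a = At X1 + Bt Y0 - c"
  define b where "b = Bt (Y1 - Y0)"
  define zt1 where "zt1 = Z0 + \<sigma> *\<^sub>R r1"
  define e where "e = At u + Bt v - c"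
  have bB: "b = Bt Y1 - Bt Y0" by (simp add: b_def linear_diff[OF linBt])
  have ar: "a = r1 - b" by (simp add: a_def r1_def bB)
  have Z1e: "Z1 = Z0 + (\<tau> * \<sigma>) *\<^sub>R r1" using zstep[of "Suc j"] by (simp add: Z1_def Z0_def r1_def X1_def Y1_def)
  have Z0e: "Z0 = Zm + (\<tau> * \<sigma>) *\<^sub>R r0" using zstep[of j] by (simp add: Zm_def Z0_def r0_def X0_def Y0_def)
  have zt1e: "zt (Suc j) = zt1" by (simp add: zt_def zt1_def Z0_def r_def r1_def X1_def Y1_def)
  have VIx: "0 \<le> P u - P X1 + (gf X0 \<bullet> (u - X1) + (X1 - X0) \<bullet> Gf (u - X1) + Z0 \<bullet> At (u - X1) + \<sigma> * (a \<bullet> At (u - X1)))"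
    using xVI[OF u, of "Suc j"] by (simp add: X0_def X1_def Z0_def a_def Y0_def)
  have VIy: "0 \<le> Q v - Q Y1 + (gg Y0 \<bullet> (v - Y1) + (Y1 - Y0) \<bullet> Gg (v - Y1) + Z0 \<bullet> Bt (v - Y1) + \<sigma> * (r1 \<bullet> Bt (v - Y1)))"
  proof -
    have "Bt Y1 + At X1 - c = r1" by (simp add: r1_def algebra_simps)
    thus ?thesis using yVI[OF v, of "Suc j"] by (simp add: Y0_def Y1_def Z0_def X1_def)
  qed
  have VIy1: "0 \<le> Q Y1 - Q Y0 + (gg Ym \<bullet> (Y1 - Y0) + (Y0 - Ym) \<bullet> Gg (Y1 - Y0) + Zm \<bullet> b + \<sigma> * (r0 \<bullet> b))"
  proof -
    have "Bt Y0 + At X0 - c = r0" by (simp add: r0_def algebra_simps)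
    thus ?thesis using yVI[OF y_dom[of "Suc (Suc j)"], of j] by (simp add: Y0_def Y1_def Ym_def Zm_def X0_def b_def)
  qed
  have VIy2: "0 \<le> Q Y0 - Q Y1 + (gg Y0 \<bullet> (Y0 - Y1) + (Y1 - Y0) \<bullet> Gg (Y0 - Y1) + Z0 \<bullet> Bt (Y0 - Y1) + \<sigma> * (r1 \<bullet> Bt (Y0 - Y1)))"
  proof -
    have "Bt Y1 + At X1 - c = r1" by (simp add: r1_def algebra_simps)
    thus ?thesis using yVI[OF y_dom[of "Suc j"], of "Suc j"] by (simp add: Y0_def Y1_def Z0_def X1_def)
  qed
  define Tx where "Tx = (u - X1) \<bullet> Gf (X1 - X0) - qnorm Sf (X1 - u) / 2 - qnorm Sf (u - X0) / 2 + qnorm Sfh (X1 - X0) / 2"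
  define Ty where "Ty = (v - Y1) \<bullet> Gg (Y1 - Y0) - qnorm Sg (Y1 - v) / 2 - qnorm Sg (v - Y0) / 2 + qnorm Sgh (Y1 - Y0) / 2"
  define Cx where "Cx = \<sigma> * ((At X1 - At u) \<bullet> b)"
  define Zt where "Zt = r1 \<bullet> (w - zt1)"
  have symx: "(X1 - X0) \<bullet> Gf (u - X1) = (u - X1) \<bullet> Gf (X1 - X0)"
    using sa_sym[OF Gf_sa, of "X1 - X0" "u - X1"] by (simp add: inner_commute)
  have symy: "(Y1 - Y0) \<bullet> Gg (v - Y1) = (v - Y1) \<bullet> Gg (Y1 - Y0)"
    using sa_sym[OF Gg_sa, of "Y1 - Y0" "v - Y1"] by (simp add: inner_commute)
  have zx: "Z0 \<bullet> At (u - X1) + \<sigma> * (a \<bullet> At (u - X1)) = zt1 \<bullet> At (u - X1) + Cx"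
    by (simp add: zt1_def Cx_def ar linear_diff[OF linAt] inner_simps algebra_simps inner_commute)
  have zy: "Z0 \<bullet> Bt (v - Y1) + \<sigma> * (r1 \<bullet> Bt (v - Y1)) = zt1 \<bullet> Bt (v - Y1)"
    by (simp add: zt1_def inner_simps algebra_simps)
  have lid: "(X1 - u) \<bullet> A w + (Y1 - v) \<bullet> B w + (zt1 - w) \<bullet> (- e) + zt1 \<bullet> At (u - X1) + zt1 \<bullet> Bt (v - Y1) = Zt"
  proof -
    have "(X1 - u) \<bullet> A w = w \<bullet> At (X1 - u)" using adjA[of w "X1 - u"] by (simp add: inner_commute)
    moreover have "(Y1 - v) \<bullet> B w = w \<bullet> Bt (Y1 - v)" using adjB[of w "Y1 - v"] by (simp add: inner_commute)
    ultimately show ?thesis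
      by (simp add: Zt_def e_def r1_def linear_diff[OF linAt] linear_diff[OF linBt] inner_simps algebra_simps inner_commute)
  qed
  have gapx: "Gap (Suc j) u v w = P X1 + Q Y1 - P u - Q v + (X1 - u) \<bullet> gf u + (X1 - u) \<bullet> A w
      + (Y1 - v) \<bullet> gg v + (Y1 - v) \<bullet> B w + (zt1 - w) \<bullet> (- e)"
    by (simp add: Gap_def zt1e X1_def Y1_def e_def inner_add_right)
  have h1: "Gap (Suc j) u v w \<le> Tx + Ty + Cx + Zt"
  proof -
    have "(X1 - u) \<bullet> gf u = - ((u - X1) \<bullet> gf u)" "(Y1 - v) \<bullet> gg v = - ((v - Y1) \<bullet> gg v)" by (simp_all add: inner_simps)
    thus ?thesis using gapx VIx VIy fx_bound[of X0 u X1] gy_bound[of Y0 v Y1] symx symy zx zy lid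
      unfolding Tx_def Ty_def by linarith
  qed
  have lSf: "linear Sf" using ops(1) sa_linear by blast
  have lS: "linear S" using ops(5) sa_linear by blast
  have lSg: "linear Sg" using ops(3) sa_linear by blast
  have lT: "linear T" using ops(6) sa_linear by blast
  define W1 where "W1 = - qnorm S (X1 - X0) / 2 - qnorm Sf (X1 - X0) / 4"
  define W2 where "W2 = - qnorm T (Y1 - Y0) / 2 - qnorm Sg (Y1 - Y0) / 4"
  have h2: "Tx \<le> (qnorm Gf (u - X0) - qnorm Gf (u - X1)) / 2 + W1"
  proof -
    have t: "(u - X1) \<bullet> Gf (X1 - X0) = (qnorm Gf (u - X0) - qnorm Gf (u - X1) - qnorm Gf (X1 - X0)) / 2"
      using qnorm_three[OF Gf_sa, of "u - X1" "X1 - X0"] by simp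
    have p: "qnorm Sf (X1 - X0) / 2 \<le> qnorm Sf (X1 - u) + qnorm Sf (u - X0)"
      using qnorm_psd_half[OF ops(1) Sig_psd(1), of "X1 - u" "u - X0"] by simp
    have o: "qnorm Gf (X1 - X0) = qnorm Sfh (X1 - X0) + qnorm S (X1 - X0)" by (rule qnorm_op_add)
    show ?thesis using t p o unfolding Tx_def W1_def by argo
  qed
  have h3: "Ty \<le> (qnorm Gg (v - Y0) - qnorm Gg (v - Y1)) / 2 + W2"
  proof -
    have t: "(v - Y1) \<bullet> Gg (Y1 - Y0) = (qnorm Gg (v - Y0) - qnorm Gg (v - Y1) - qnorm Gg (Y1 - Y0)) / 2"
      using qnorm_three[OF Gg_sa, of "v - Y1" "Y1 - Y0"] by simp
    have p: "qnorm Sg (Y1 - Y0) / 2 \<le> qnorm Sg (Y1 - v) + qnorm Sg (v - Y0)"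
      using qnorm_psd_half[OF ops(3) Sig_psd(2), of "Y1 - v" "v - Y0"] by simp
    have o: "qnorm Gg (Y1 - Y0) = qnorm Sgh (Y1 - Y0) + qnorm T (Y1 - Y0)" by (rule qnorm_op_add)
    show ?thesis using t p o unfolding Ty_def W2_def by argo
  qed
  have h4: "Cx = \<sigma> / 2 * ((norm r1)\<^sup>2 - (norm a)\<^sup>2 - (norm (At u + Bt Y1 - c))\<^sup>2 + (norm (At u + Bt Y0 - c))\<^sup>2)"
    using cross_identity[of "At X1" "At u" "Bt Y1" "Bt Y0" c] unfolding Cx_def bB r1_def a_def by simp
  have h5: "W1 \<le> (1 - \<alpha>) * \<sigma> / 2 * ((norm a)\<^sup>2 + (norm r0)\<^sup>2)"
  proof -
    define k where "k = (1 - \<alpha>) * \<sigma> / 2"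
    have k0: "0 \<le> k" using alpha(2) sigma by (simp add: k_def)
    have "0 \<le> qnorm (\<lambda>u. (1/2) *\<^sub>R Sf u + S u + ((1 - \<alpha>) * \<sigma> / 2) *\<^sub>R A (At u)) (X1 - X0)"
      using c2 psd_op_def by blast
    hence c: "0 \<le> qnorm Sf (X1 - X0) / 2 + qnorm S (X1 - X0) + k * (norm (At (X1 - X0)))\<^sup>2"
      by (simp add: qnorm_def inner_add_right qnA k_def)
    have ad: "At (X1 - X0) = a - r0" by (simp add: a_def r0_def linear_diff[OF linAt])
    have "(norm (At (X1 - X0)))\<^sup>2 \<le> 2 * (norm a)\<^sup>2 + 2 * (norm r0)\<^sup>2" unfolding ad by (rule norm_sq_diff_le)
    hence "k * (norm (At (X1 - X0)))\<^sup>2 \<le> k * (2 * (norm a)\<^sup>2 + 2 * (norm r0)\<^sup>2)" using k0 by (rule mult_left_mono)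
    moreover have "k * (2 * (norm a)\<^sup>2 + 2 * (norm r0)\<^sup>2) = 2 * (k * ((norm a)\<^sup>2 + (norm r0)\<^sup>2))"
      by (simp add: algebra_simps)
    ultimately have "W1 \<le> k * ((norm a)\<^sup>2 + (norm r0)\<^sup>2)" using c unfolding W1_def by argo
    thus ?thesis by (simp add: k_def)
  qed
  have h6: "W2 \<le> mm * \<alpha> * \<sigma> / 2 * (norm b)\<^sup>2"
  proof -
    have "0 \<le> qnorm (\<lambda>v. (1/2) *\<^sub>R Sg v + T v + (min \<tau> (1 + \<tau> - \<tau>\<^sup>2) * \<alpha> * \<sigma>) *\<^sub>R B (Bt v)) (Y1 - Y0)"
      using c5 pd_nonneg by blast
    hence "0 \<le> qnorm Sg (Y1 - Y0) / 2 + qnorm T (Y1 - Y0) + mm * \<alpha> * \<sigma> * (norm b)\<^sup>2"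
      by (simp add: qnorm_def inner_add_right qnB mm_def b_def)
    thus ?thesis unfolding W2_def by (simp add: algebra_simps)
  qed
  have h7: "(norm a)\<^sup>2 = (norm r1)\<^sup>2 - 2 * (r1 \<bullet> b) + (norm b)\<^sup>2" unfolding ar by (rule norm_sq_diff)
  have h8: "\<sigma> * (r1 \<bullet> b) + (\<tau> - 1) * \<sigma> * (b \<bullet> r0) \<le> (qnorm Gg (Y0 - Ym) - qnorm Gg (Y1 - Y0)) / 2"
  proof -
    define s where "s = (Y1 - Y0) - (Y0 - Ym)"
    have co: "(gg Ym - gg Y0) \<bullet> (Y1 - Y0) \<le> qnorm Sgh s / 4"
      using coco[of Ym Y0 s] by (simp add: s_def)
    have lGg: "linear Gg" using Gg_sa sa_linear by blast
    have e1: "gg Y0 \<bullet> (Y0 - Y1) = - (gg Y0 \<bullet> (Y1 - Y0))" by (simp add: inner_simps)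
    have e2: "(Y1 - Y0) \<bullet> Gg (Y0 - Y1) = - qnorm Gg (Y1 - Y0)"
    proof -
      have "Y0 - Y1 = - (Y1 - Y0)" by simp
      hence "Gg (Y0 - Y1) = - Gg (Y1 - Y0)" using linear_neg[OF lGg] by metis
      thus ?thesis by (simp add: qnorm_def inner_add_right inner_diff_right)
    qed
    have e3: "Bt (Y0 - Y1) = - b" by (simp add: b_def linear_diff[OF linBt])
    have e4: "(gg Ym - gg Y0) \<bullet> (Y1 - Y0) = gg Ym \<bullet> (Y1 - Y0) - gg Y0 \<bullet> (Y1 - Y0)" by (simp add: inner_simps)
    have e5: "Zm \<bullet> b - Z0 \<bullet> b = - (\<tau> * \<sigma> * (r0 \<bullet> b))" unfolding Z0e by (simp add: inner_simps)
    have e6: "(\<tau> - 1) * \<sigma> * (b \<bullet> r0) = \<tau> * \<sigma> * (r0 \<bullet> b) - \<sigma> * (r0 \<bullet> b)" by (simp add: algebra_simps inner_commute)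
    have e7: "(Y0 - Ym) \<bullet> Gg (Y1 - Y0) = (Y1 - Y0) \<bullet> Gg (Y0 - Ym)"
      using sa_sym[OF Gg_sa, of "Y1 - Y0" "Y0 - Ym"] by (simp add: inner_commute)
    have e8: "qnorm Gg s = qnorm Gg (Y1 - Y0) - 2 * ((Y1 - Y0) \<bullet> Gg (Y0 - Ym)) + qnorm Gg (Y0 - Ym)"
      unfolding s_def by (rule qnorm_diff[OF Gg_sa])
    have e9: "qnorm Gg s = qnorm Sgh s + qnorm T s" by (rule qnorm_op_add)
    have c4': "0 \<le> qnorm Sgh s / 2 + qnorm T s"
    proof -
      have "0 \<le> qnorm (\<lambda>v. (1/2) *\<^sub>R Sgh v + T v) s" using c4 psd_op_def by blast
      thus ?thesis by (simp add: qnorm_def inner_add_right)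
    qed
    have e10: "Z0 \<bullet> - b = - (Z0 \<bullet> b)" "r1 \<bullet> - b = - (r1 \<bullet> b)" by simp_all
    have V2: "0 \<le> Q Y0 - Q Y1 + (- (gg Y0 \<bullet> (Y1 - Y0)) + - qnorm Gg (Y1 - Y0) + - (Z0 \<bullet> b) + \<sigma> * - (r1 \<bullet> b))"
      using VIy2 unfolding e3 e1 e2 e10 .
    show ?thesis using VIy1 V2 co e4 e5 e6 e7 e8 e9 c4' by argo
  qed
  have h9: "(\<tau> - 2 * \<alpha>) * (norm r0)\<^sup>2 - 2 * \<alpha> * (\<tau> - 1) * (b \<bullet> r0) - \<alpha> * (1 - mm) * (norm b)\<^sup>2 \<le> 0"
  proof -
    define D where "D = 2 * \<alpha> - \<tau>"
    define Bc where "Bc = \<alpha> * (\<tau> - 1)"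
    define C where "C = \<alpha> * (1 - mm)"
    have D: "0 < D" using params(2) by (simp add: D_def)
    have DC: "Bc\<^sup>2 \<le> D * C" using params(3) by (simp add: D_def Bc_def C_def)
    have sq: "0 \<le> (norm (D *\<^sub>R r0 + Bc *\<^sub>R b))\<^sup>2" by simp
    have sq2: "(norm (D *\<^sub>R r0 + Bc *\<^sub>R b))\<^sup>2 = D * (D * (norm r0)\<^sup>2) + 2 * (D * (Bc * (b \<bullet> r0))) + Bc\<^sup>2 * (norm b)\<^sup>2"
      unfolding norm_sq_add by (simp add: power_mult_distrib inner_commute power2_eq_square algebra_simps)
    have "Bc\<^sup>2 * (norm b)\<^sup>2 \<le> (D * C) * (norm b)\<^sup>2" using DC by (rule mult_right_mono) simp
    moreover have "0 \<le> D * (D * (norm r0)\<^sup>2) + 2 * (D * (Bc * (b \<bullet> r0))) + Bc\<^sup>2 * (norm b)\<^sup>2"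
      using sq unfolding sq2 .
    moreover have "D * (D * (norm r0)\<^sup>2 + 2 * (Bc * (b \<bullet> r0)) + C * (norm b)\<^sup>2)
       = D * (D * (norm r0)\<^sup>2) + 2 * (D * (Bc * (b \<bullet> r0))) + (D * C) * (norm b)\<^sup>2"
      by (simp add: algebra_simps)
    ultimately have "0 \<le> D * (D * (norm r0)\<^sup>2 + 2 * (Bc * (b \<bullet> r0)) + C * (norm b)\<^sup>2)"
      by argo
    hence "0 \<le> D * (norm r0)\<^sup>2 + 2 * (Bc * (b \<bullet> r0)) + C * (norm b)\<^sup>2" using D by (simp add: zero_le_mult_iff)
    thus ?thesis by (simp add: D_def Bc_def C_def algebra_simps)
  qed
  define icv where "icv = ((norm (Z0 - w))\<^sup>2 - (norm (Z1 - w))\<^sup>2) / (2 * \<tau> * \<sigma>)"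
  have h10: "Zt = icv + (\<tau> * \<sigma> / 2 - \<sigma>) * (norm r1)\<^sup>2"
  proof -
    have ts: "\<tau> * \<sigma> \<noteq> 0" using tau_pos sigma by simp
    have eqz: "Z1 - w = (Z0 - w) + (\<tau> * \<sigma>) *\<^sub>R r1" unfolding Z1e by simp
    have n0: "(norm (Z1 - w))\<^sup>2 = (norm (Z0 - w))\<^sup>2 + 2 * ((Z0 - w) \<bullet> ((\<tau> * \<sigma>) *\<^sub>R r1)) + (norm ((\<tau> * \<sigma>) *\<^sub>R r1))\<^sup>2"
      unfolding eqz by (rule norm_sq_add)
    have n1: "(norm ((\<tau> * \<sigma>) *\<^sub>R r1))\<^sup>2 = (\<tau> * \<sigma>) * ((\<tau> * \<sigma>) * (norm r1)\<^sup>2)"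
      by (simp add: power_mult_distrib power2_eq_square)
    have n: "(norm (Z1 - w))\<^sup>2 = (norm (Z0 - w))\<^sup>2 + 2 * ((\<tau> * \<sigma>) * ((Z0 - w) \<bullet> r1)) + (\<tau> * \<sigma>) * ((\<tau> * \<sigma>) * (norm r1)\<^sup>2)"
      using n0 n1 by simp
    have "icv = - ((Z0 - w) \<bullet> r1) - \<tau> * \<sigma> / 2 * (norm r1)\<^sup>2"
      unfolding icv_def n using ts by (simp add: field_simps)
    thus ?thesis by (simp add: Zt_def zt1_def inner_simps algebra_simps inner_commute power2_norm_eq_inner)
  qed
  note fc = final_comb[OF h1 h2 h3 h4 h5 h6 h7 h8 h9 h10 sigma less_imp_le[OF params(1)]]
  have pj: "Psi j u v w = (norm (Z0 - w))\<^sup>2 / (2 * \<tau> * \<sigma>) + qnorm Gf (u - X0) / 2 + qnorm Gg (v - Y0) / 2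
      + \<sigma> / 2 * (norm (At u + Bt Y0 - c))\<^sup>2 + gam * (norm r0)\<^sup>2 + \<alpha> / 2 * qnorm Gg (Y0 - Ym)"
    by (simp add: Psi_def X0_def Y0_def Z0_def Ym_def r_def r0_def)
  have ps: "Psi (Suc j) u v w = (norm (Z1 - w))\<^sup>2 / (2 * \<tau> * \<sigma>) + qnorm Gf (u - X1) / 2 + qnorm Gg (v - Y1) / 2
      + \<sigma> / 2 * (norm (At u + Bt Y1 - c))\<^sup>2 + gam * (norm r1)\<^sup>2 + \<alpha> / 2 * qnorm Gg (Y1 - Y0)"
    by (simp add: Psi_def X1_def Y1_def Z1_def Y0_def r_def r1_def)
  have i: "icv = (norm (Z0 - w))\<^sup>2 / (2 * \<tau> * \<sigma>) - (norm (Z1 - w))\<^sup>2 / (2 * \<tau> * \<sigma>)"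
    by (simp add: icv_def diff_divide_distrib)
  have d1: "\<sigma> / 2 * ((norm (At u + Bt Y0 - c))\<^sup>2 - (norm (At u + Bt Y1 - c))\<^sup>2)
      = \<sigma> / 2 * (norm (At u + Bt Y0 - c))\<^sup>2 - \<sigma> / 2 * (norm (At u + Bt Y1 - c))\<^sup>2" by (rule right_diff_distrib)
  have d2: "((\<alpha> + 1 - \<tau>) * \<sigma> / 2) * ((norm r0)\<^sup>2 - (norm r1)\<^sup>2) = gam * (norm r0)\<^sup>2 - gam * (norm r1)\<^sup>2"
    by (simp add: gam_def right_diff_distrib)
  have d3: "\<alpha> / 2 * (qnorm Gg (Y0 - Ym) - qnorm Gg (Y1 - Y0)) = \<alpha> / 2 * qnorm Gg (Y0 - Ym) - \<alpha> / 2 * qnorm Gg (Y1 - Y0)"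
    by (rule right_diff_distrib)
  show ?thesis using fc pj ps i d1 d2 d3 by argo
qed

end



lemma coercive:
  fixes G :: "'a::euclidean_space \<Rightarrow> 'a"
  assumes lin: "linear G" and pd: "pd_op G"
  obtains c where "c > 0" "\<And>d. c * (norm d)\<^sup>2 \<le> qnorm G d"
proof -
  have cont: "continuous_on (sphere 0 1) (\<lambda>d. qnorm G d)"
  proof -
    have "continuous_on (sphere 0 1) G" using lin by (simp add: linear_continuous_on linear_conv_bounded_linear)
    thus ?thesis unfolding qnorm_def by (intro continuous_intros)
  qed
  obtain e :: 'a where e: "e \<in> Basis" using nonempty_Basis by blast
  have "e \<in> sphere (0::'a) 1" using norm_Basis[OF e] by simp
  hence ne: "sphere (0::'a) 1 \<noteq> {}" by blast
  obtain d0 where d0: "d0 \<in> sphere 0 1" "\<And>d. d \<in> sphere 0 1 \<Longrightarrow> qnorm G d0 \<le> qnorm G d"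
    using continuous_attains_inf[OF compact_sphere ne cont] by blast
  have d0n: "d0 \<noteq> 0" using d0(1) by auto
  have cpos: "qnorm G d0 > 0" using pd d0n by (simp add: pd_op_def)
  show ?thesis
  proof (rule that[OF cpos])
    fix d :: 'a
    show "qnorm G d0 * (norm d)\<^sup>2 \<le> qnorm G d"
    proof (cases "d = 0")
      case True thus ?thesis by (simp add: qnorm_def linear_0[OF lin])
    next
      case False
      define d1 where "d1 = (1 / norm d) *\<^sub>R d"
      have "d1 \<in> sphere 0 1" using False by (simp add: d1_def)
      hence "qnorm G d0 \<le> qnorm G d1" by (rule d0(2))
      also have "qnorm G d1 = qnorm G d / (norm d)\<^sup>2"
        unfolding d1_def qnorm_scale[OF lin] by (simp add: power2_eq_square field_simps)
      finally show ?thesis using False by (simp add: field_simps)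
    qed
  qed
qed

lemma coercive_ex:
  fixes G :: "'a::euclidean_space \<Rightarrow> 'a"
  assumes lin: "linear G" and pd: "pd_op G"
  shows "\<exists>c>0. \<forall>d. c * (norm d)\<^sup>2 \<le> qnorm G d"
  using coercive[OF lin pd] by metis

lemma qnorm_upper:
  fixes G :: "'a::euclidean_space \<Rightarrow> 'a"
  assumes lin: "linear G"
  obtains K where "K > 0" "\<And>d. qnorm G d \<le> K * (norm d)\<^sup>2"
proof -
  obtain K where K: "K > 0" "\<And>d. norm (G d) \<le> K * norm d" using linear_bounded_pos[OF lin] by blast
  show ?thesis
  proof (rule that[OF K(1)])
    fix d
    have "qnorm G d \<le> norm d * norm (G d)" unfolding qnorm_def by (rule order_trans[OF _ norm_cauchy_schwarz]) simp
    also have "\<dots> \<le> norm d * (K * norm d)" using K(2) by (simp add: mult_left_mono)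
    finally show "qnorm G d \<le> K * (norm d)\<^sup>2" by (simp add: power2_eq_square algebra_simps)
  qed
qed

lemma norm_le_sq: "norm (d::'a::real_normed_vector) \<le> 1 + (norm d)\<^sup>2"
proof (cases "norm d \<le> 1")
  case True thus ?thesis by (smt (verit) zero_le_power2)
next
  case False
  hence "norm d * 1 \<le> norm d * norm d" by (intro mult_left_mono) auto
  thus ?thesis by (simp add: power2_eq_square)
qed

context admm begin

lemma telescope: "(\<Sum>j<k. Gap (Suc j) u v w) \<le> Psi 0 u v w - Psi k u v w"
  if "u \<in> edom p" "v \<in> edom q"
proof (induction k)
  case 0 thus ?case by simp
next
  case (Suc k) thus ?case using step[OF that, of k w] by simp
qed

lemma Gf_psd: "0 \<le> qnorm Gf d" using c1 psd_op_def by blast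
lemma Gg_psd: "0 \<le> qnorm Gg d"
proof -
  have "0 \<le> qnorm (\<lambda>v. (1/2) *\<^sub>R Sgh v + T v) d" using c4 psd_op_def by blast
  hence a: "0 \<le> qnorm Sgh d / 2 + qnorm T d" by (simp add: qnorm_def inner_add_right)
  have "0 \<le> qnorm (\<lambda>u. Sgh u - Sg u) d" using Sig_psd(4) psd_op_def by blast
  moreover have "0 \<le> qnorm Sg d" using Sig_psd(2) psd_op_def by blast
  ultimately have "0 \<le> qnorm Sgh d" by (simp add: qnorm_op_diff)
  thus ?thesis using a by (simp add: qnorm_op_add)
qed

lemma Psi_nonneg: "0 \<le> Psi j u v w"
proof -
  have "0 \<le> (norm (z (Suc j) - w))\<^sup>2 / (2 * \<tau> * \<sigma>)" using tau_pos sigma by simp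
  moreover have "0 \<le> gam * (norm (r (Suc j)))\<^sup>2" using params(4) by simp
  moreover have "0 \<le> \<alpha> / 2 * qnorm Gg (y (Suc j) - y j)" using params(1) Gg_psd by simp
  moreover have "0 \<le> \<sigma> / 2 * (norm (At u + Bt (y (Suc j)) - c))\<^sup>2" using sigma by simp
  ultimately show ?thesis unfolding Psi_def using Gf_psd[of "u - x (Suc j)"] Gg_psd[of "v - y (Suc j)"] by linarith
qed


lemma Psi_ge:
  shows "(norm (z (Suc j) - w))\<^sup>2 / (2 * \<tau> * \<sigma>) \<le> Psi j u v w"
    "qnorm Gf (u - x (Suc j)) / 2 \<le> Psi j u v w"
    "qnorm Gg (v - y (Suc j)) / 2 + \<sigma> / 2 * (norm (At u + Bt (y (Suc j)) - c))\<^sup>2 \<le> Psi j u v w"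
proof -
  have a: "0 \<le> (norm (z (Suc j) - w))\<^sup>2 / (2 * \<tau> * \<sigma>)" using tau_pos sigma by simp
  have b: "0 \<le> gam * (norm (r (Suc j)))\<^sup>2" using params(4) by simp
  have c: "0 \<le> \<alpha> / 2 * qnorm Gg (y (Suc j) - y j)" using params(1) Gg_psd by simp
  have d: "0 \<le> \<sigma> / 2 * (norm (At u + Bt (y (Suc j)) - c))\<^sup>2" using sigma by simp
  have e: "0 \<le> qnorm Gf (u - x (Suc j)) / 2" using Gf_psd by simp
  have f: "0 \<le> qnorm Gg (v - y (Suc j)) / 2" using Gg_psd by simp
  show "(norm (z (Suc j) - w))\<^sup>2 / (2 * \<tau> * \<sigma>) \<le> Psi j u v w"
    "qnorm Gf (u - x (Suc j)) / 2 \<le> Psi j u v w"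
    "qnorm Gg (v - y (Suc j)) / 2 + \<sigma> / 2 * (norm (At u + Bt (y (Suc j)) - c))\<^sup>2 \<le> Psi j u v w"
    unfolding Psi_def using a b c d e f by argo+
qed

lemma Mg_lin: "linear (\<lambda>v. (1/2) *\<^sub>R Sg v + T v + (min \<tau> (1 + \<tau> - \<tau>\<^sup>2) * \<alpha> * \<sigma>) *\<^sub>R B (Bt v))"
  using ops(3,6) linB linBt
  by (intro linear_compose_add linear_compose_scale_right linear_compose[unfolded o_def, of Bt B]) (auto simp: sa_linear)

lemma Mf_lin: "linear (\<lambda>u. (1/2) *\<^sub>R Sf u + S u + \<sigma> *\<^sub>R A (At u))"
  using ops(1,5) linA linAt
  by (intro linear_compose_add linear_compose_scale_right linear_compose[unfolded o_def, of At A]) (auto simp: sa_linear)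

lemma bounded_iter:
  obtains R where "\<And>k. norm (x k) \<le> R" "\<And>k. norm (y k) \<le> R" "\<And>k. norm (z k) \<le> R" "\<And>k. norm (r k) \<le> R"
proof -
  obtain xs ys zs where xs: "xs \<in> edom p" and ys: "ys \<in> edom q" and fs: "At xs + Bt ys = c"
    and vx: "\<And>u. u \<in> edom p \<Longrightarrow> 0 \<le> P u - P xs + (gf xs \<bullet> (u - xs) + zs \<bullet> At (u - xs))"
    and vy: "\<And>v. v \<in> edom q \<Longrightarrow> 0 \<le> Q v - Q ys + (gg ys \<bullet> (v - ys) + zs \<bullet> Bt (v - ys))"
    using kkt by blast
  have gap0: "0 \<le> Gap k xs ys zs" for k
  proof -
    have e1: "(x (Suc k) - xs) \<bullet> (gf xs + A zs) = gf xs \<bullet> (x (Suc k) - xs) + zs \<bullet> At (x (Suc k) - xs)"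
      using adjA[of zs "x (Suc k) - xs"] by (simp add: inner_add_right inner_commute)
    have e2: "(y (Suc k) - ys) \<bullet> (gg ys + B zs) = gg ys \<bullet> (y (Suc k) - ys) + zs \<bullet> Bt (y (Suc k) - ys)"
      using adjB[of zs "y (Suc k) - ys"] by (simp add: inner_add_right inner_commute)
    have e3: "At xs + Bt ys - c = 0" using fs by simp
    have e4: "(zt k - zs) \<bullet> (- (At xs + Bt ys - c)) = 0" unfolding e3 by simp
    have v1: "0 \<le> P (x (Suc k)) - P xs + (gf xs \<bullet> (x (Suc k) - xs) + zs \<bullet> At (x (Suc k) - xs))"
      by (rule vx) (rule x_dom)
    have v2: "0 \<le> Q (y (Suc k)) - Q ys + (gg ys \<bullet> (y (Suc k) - ys) + zs \<bullet> Bt (y (Suc k) - ys))"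
      by (rule vy) (rule y_dom)
    show ?thesis using v1 v2 e4 unfolding Gap_def e1 e2 by linarith
  qed
  define M where "M = Psi 0 xs ys zs"
  have PM: "Psi j xs ys zs \<le> M" for j
  proof -
    have "0 \<le> (\<Sum>i<j. Gap (Suc i) xs ys zs)" using gap0 by (intro sum_nonneg) auto
    thus ?thesis using telescope[OF xs ys, where k = j and w = zs] by (simp add: M_def)
  qed
  have ts: "0 < \<tau> * \<sigma>" using tau_pos sigma by simp
  define Kz where "Kz = (norm (z 0 - zs))\<^sup>2 + 2 * \<tau> * \<sigma> * M"
  have M0: "0 \<le> M" using Psi_nonneg by (simp add: M_def)
  have zb: "(norm (z j - zs))\<^sup>2 \<le> Kz" for j
  proof (cases j)
    case 0
    have "0 \<le> (2 * (\<tau> * \<sigma>)) * M" using M0 tau_pos sigma by (intro mult_nonneg_nonneg) auto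
    hence "0 \<le> 2 * \<tau> * \<sigma> * M" by (simp add: mult.assoc)
    thus ?thesis using 0 by (simp add: Kz_def)
  next
    case (Suc i)
    have "(norm (z (Suc i) - zs))\<^sup>2 / (2 * \<tau> * \<sigma>) \<le> M"
      using PM[of i] Psi_ge(1)[of i zs xs ys] by linarith
    hence "(norm (z (Suc i) - zs))\<^sup>2 \<le> 2 * \<tau> * \<sigma> * M" using ts by (simp add: divide_le_eq mult.commute mult.left_commute)
    thus ?thesis unfolding Suc Kz_def using zero_le_power2[of "norm (z 0 - zs)"] by linarith
  qed
  define Rr where "Rr = 2 * (1 + Kz) / (\<tau> * \<sigma>)"
  have rb: "norm (r (Suc j)) \<le> Rr" for j
  proof -
    have "z (Suc j) - z j = (\<tau> * \<sigma>) *\<^sub>R r (Suc j)" using zstep[of j] by (simp add: r_def)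
    hence "norm (z (Suc j) - z j) = (\<tau> * \<sigma>) * norm (r (Suc j))" using ts by simp
    moreover have "norm (z (Suc j) - z j) \<le> norm (z (Suc j) - zs) + norm (z j - zs)"
      by (metis norm_triangle_sub diff_diff_eq2 norm_minus_commute add.commute diff_add_cancel norm_diff_triangle_ineq)
    moreover have "norm (z (Suc j) - zs) \<le> 1 + Kz" using norm_le_sq[of "z (Suc j) - zs"] zb[of "Suc j"] by linarith
    moreover have "norm (z j - zs) \<le> 1 + Kz" using norm_le_sq[of "z j - zs"] zb[of j] by linarith
    ultimately have "(\<tau> * \<sigma>) * norm (r (Suc j)) \<le> 2 * (1 + Kz)" by argo
    thus ?thesis using ts by (simp add: Rr_def pos_le_divide_eq mult.commute)
  qed
  obtain cy where cy: "cy > 0" "\<And>d. cy * (norm d)\<^sup>2 \<le> qnorm (\<lambda>v. (1/2) *\<^sub>R Sg v + T v + (min \<tau> (1 + \<tau> - \<tau>\<^sup>2) * \<alpha> * \<sigma>) *\<^sub>R B (Bt v)) d"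
    using coercive_ex[OF Mg_lin c5] by auto
  define Ky where "Ky = 2 * M / cy"
  have yb: "(norm (y (Suc j) - ys))\<^sup>2 \<le> Ky" for j
  proof -
    define d where "d = y (Suc j) - ys"
    have "qnorm Gg (ys - y (Suc j)) / 2 + \<sigma> / 2 * (norm (At xs + Bt (y (Suc j)) - c))\<^sup>2 \<le> M"
      using PM[of j] Psi_ge(3)[of ys j xs zs] by linarith
    moreover have "At xs + Bt (y (Suc j)) - c = Bt d"
      by (subst fs[symmetric]) (simp add: d_def linear_diff[OF linBt])
    moreover have "qnorm Gg (ys - y (Suc j)) = qnorm Gg d"
      using qnorm_minus[OF sa_linear[OF Gg_sa], of d] by (simp add: d_def)
    ultimately have m: "qnorm Gg d / 2 + \<sigma> / 2 * (norm (Bt d))\<^sup>2 \<le> M" by simp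
    have q: "qnorm (\<lambda>v. (1/2) *\<^sub>R Sg v + T v + (min \<tau> (1 + \<tau> - \<tau>\<^sup>2) * \<alpha> * \<sigma>) *\<^sub>R B (Bt v)) d
        = qnorm Sg d / 2 + qnorm T d + mm * \<alpha> * \<sigma> * (norm (Bt d))\<^sup>2"
      by (simp add: qnorm_def inner_add_right qnB mm_def)
    have s1: "qnorm Sg d \<le> qnorm Sgh d"
    proof -
      have "0 \<le> qnorm (\<lambda>u. Sgh u - Sg u) d" using Sig_psd(4) psd_op_def by blast
      thus ?thesis by (simp add: qnorm_op_diff)
    qed
    have s0: "0 \<le> qnorm Sg d" using Sig_psd(2) psd_op_def by blast
    have s2: "mm * \<alpha> * \<sigma> * (norm (Bt d))\<^sup>2 \<le> \<sigma> * (norm (Bt d))\<^sup>2"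
    proof -
      have "(mm * \<alpha>) * (\<sigma> * (norm (Bt d))\<^sup>2) \<le> 1 * (\<sigma> * (norm (Bt d))\<^sup>2)"
        using params(5) sigma by (intro mult_right_mono) auto
      thus ?thesis by (simp add: algebra_simps)
    qed
    have gq: "qnorm Gg d = qnorm Sgh d + qnorm T d" by (rule qnorm_op_add)
    have "cy * (norm d)\<^sup>2 \<le> 2 * M" using cy(2)[of d] q s1 s0 s2 gq m by linarith
    thus ?thesis using cy(1) by (simp add: Ky_def d_def pos_le_divide_eq mult.commute)
  qed
  obtain KB where KB: "KB > 0" "\<And>d. norm (Bt d) \<le> KB * norm d" using linear_bounded_pos[OF linBt] by blast
  define Ra where "Ra = Rr + KB * (1 + Ky)"
  obtain cx where cx: "cx > 0" "\<And>d. cx * (norm d)\<^sup>2 \<le> qnorm (\<lambda>u. (1/2) *\<^sub>R Sf u + S u + \<sigma> *\<^sub>R A (At u)) d"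
    using coercive_ex[OF Mf_lin c3] by auto
  define Kx where "Kx = (2 * M + \<sigma> * Ra\<^sup>2) / cx"
  have xb: "(norm (x (Suc j) - xs))\<^sup>2 \<le> Kx" for j
  proof -
    define d where "d = x (Suc j) - xs"
    have "qnorm Gf (xs - x (Suc j)) / 2 \<le> M"
      using PM[of j] Psi_ge(2)[of xs j ys zs] by linarith
    moreover have "qnorm Gf (xs - x (Suc j)) = qnorm Gf d"
      using qnorm_minus[OF sa_linear[OF Gf_sa], of d] by (simp add: d_def)
    ultimately have m: "qnorm Gf d \<le> 2 * M" by simp
    have ad: "At d = r (Suc j) - Bt (y (Suc j) - ys)"
      unfolding r_def d_def by (subst fs[symmetric], simp add: linear_diff[OF linAt] linear_diff[OF linBt] algebra_simps)
    have "norm (At d) \<le> norm (r (Suc j)) + norm (Bt (y (Suc j) - ys))" unfolding ad by (rule norm_triangle_ineq4)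
    also have "\<dots> \<le> Rr + KB * (1 + Ky)"
    proof -
      have "norm (y (Suc j) - ys) \<le> 1 + Ky" using norm_le_sq[of "y (Suc j) - ys"] yb[of j] by linarith
      hence "KB * norm (y (Suc j) - ys) \<le> KB * (1 + Ky)" using KB(1) by simp
      thus ?thesis using rb[of j] KB(2)[of "y (Suc j) - ys"] by linarith
    qed
    finally have "norm (At d) \<le> Ra" by (simp add: Ra_def)
    hence "(norm (At d))\<^sup>2 \<le> Ra\<^sup>2" by (simp add: power_mono)
    hence s3: "\<sigma> * (norm (At d))\<^sup>2 \<le> \<sigma> * Ra\<^sup>2" using sigma by simp
    have q: "qnorm (\<lambda>u. (1/2) *\<^sub>R Sf u + S u + \<sigma> *\<^sub>R A (At u)) d = qnorm Sf d / 2 + qnorm S d + \<sigma> * (norm (At d))\<^sup>2"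
      by (simp add: qnorm_def inner_add_right qnA)
    have s1: "qnorm Sf d \<le> qnorm Sfh d"
    proof -
      have "0 \<le> qnorm (\<lambda>u. Sfh u - Sf u) d" using Sig_psd(3) psd_op_def by blast
      thus ?thesis by (simp add: qnorm_op_diff)
    qed
    have s0: "0 \<le> qnorm Sf d" using Sig_psd(1) psd_op_def by blast
    have gq: "qnorm Gf d = qnorm Sfh d + qnorm S d" by (rule qnorm_op_add)
    have "cx * (norm d)\<^sup>2 \<le> 2 * M + \<sigma> * Ra\<^sup>2" using cx(2)[of d] q s1 s0 s3 gq m by linarith
    thus ?thesis using cx(1) by (simp add: Kx_def d_def pos_le_divide_eq mult.commute)
  qed
  define R where "R = max (max (norm xs + 1 + Kx) (norm (x 0))) (max (max (norm ys + 1 + Ky) (norm (y 0)))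
                       (max (max (norm zs + 1 + Kz) Rr) (norm (r 0))))"
  show ?thesis
  proof (rule that)
    fix k
    show "norm (x k) \<le> R"
    proof (cases k)
      case 0 thus ?thesis by (simp add: R_def)
    next
      case (Suc j)
      have "norm (x (Suc j)) \<le> norm xs + norm (x (Suc j) - xs)" by (metis norm_triangle_sub add.commute)
      also have "\<dots> \<le> norm xs + 1 + Kx" using norm_le_sq[of "x (Suc j) - xs"] xb[of j] by linarith
      finally show ?thesis using Suc by (simp add: R_def)
    qed
    show "norm (y k) \<le> R"
    proof (cases k)
      case 0 thus ?thesis by (simp add: R_def)
    next
      case (Suc j)
      have "norm (y (Suc j)) \<le> norm ys + norm (y (Suc j) - ys)" by (metis norm_triangle_sub add.commute)
      also have "\<dots> \<le> norm ys + 1 + Ky" using norm_le_sq[of "y (Suc j) - ys"] yb[of j] by linarith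
      finally show ?thesis using Suc by (simp add: R_def)
    qed
    show "norm (z k) \<le> R"
    proof -
      have "norm (z k) \<le> norm zs + norm (z k - zs)" by (metis norm_triangle_sub add.commute)
      also have "\<dots> \<le> norm zs + 1 + Kz" using norm_le_sq[of "z k - zs"] zb[of k] by linarith
      finally show ?thesis by (simp add: R_def)
    qed
    show "norm (r k) \<le> R"
    proof (cases k)
      case 0 thus ?thesis by (simp add: R_def)
    next
      case (Suc j) thus ?thesis using rb[of j] by (simp add: R_def)
    qed
  qed
qed

end



lemma avg_inner:
  fixes a :: "nat \<Rightarrow> 'a::real_inner"
  assumes "finite I" "card I = n" "n > 0"
  shows "((1 / real n) *\<^sub>R (\<Sum>i\<in>I. a i) - u) \<bullet> g = (1 / real n) * (\<Sum>i\<in>I. (a i - u) \<bullet> g)"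
proof -
  have "(\<Sum>i\<in>I. (a i - u) \<bullet> g) = (\<Sum>i\<in>I. a i \<bullet> g) - real n * (u \<bullet> g)"
    using assms by (simp add: inner_diff_left sum_subtractf)
  moreover have "((1 / real n) *\<^sub>R (\<Sum>i\<in>I. a i) - u) \<bullet> g = (1 / real n) * (\<Sum>i\<in>I. a i \<bullet> g) - u \<bullet> g"
    by (simp add: inner_diff_left inner_sum_left)
  ultimately show ?thesis using assms(3) by (simp add: field_simps)
qed

lemma sq_bound: "norm (d::'a::real_normed_vector) \<le> t \<Longrightarrow> (norm d)\<^sup>2 \<le> t\<^sup>2"
  by (simp add: power_mono)

context admm begin

lemma Psi0_bound:
  obtains C where "\<And>u v w. norm u \<le> \<rho> \<Longrightarrow> norm v \<le> \<rho> \<Longrightarrow> norm w \<le> \<rho> \<Longrightarrow> Psi 0 u v w \<le> C"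
proof -
  obtain Kf where Kf: "Kf > 0" "\<And>d. qnorm Gf d \<le> Kf * (norm d)\<^sup>2" using qnorm_upper[OF sa_linear[OF Gf_sa]] by blast
  obtain Kg where Kg: "Kg > 0" "\<And>d. qnorm Gg d \<le> Kg * (norm d)\<^sup>2" using qnorm_upper[OF sa_linear[OF Gg_sa]] by blast
  obtain KA where KA: "KA > 0" "\<And>d. norm (At d) \<le> KA * norm d" using linear_bounded_pos[OF linAt] by blast
  define C where "C = (norm (z 1) + \<rho>)\<^sup>2 / (2 * \<tau> * \<sigma>) + Kf * (\<rho> + norm (x 1))\<^sup>2 / 2 + Kg * (\<rho> + norm (y 1))\<^sup>2 / 2
     + \<sigma> / 2 * (KA * \<rho> + norm (Bt (y 1) - c))\<^sup>2 + gam * (norm (r 1))\<^sup>2 + \<alpha> / 2 * qnorm Gg (y 1 - y 0)"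
  show ?thesis
  proof (rule that)
    fix u :: 'a and v :: 'b and w :: 'c assume uvw: "norm u \<le> \<rho>" "norm v \<le> \<rho>" "norm w \<le> \<rho>"
    have ts: "0 < 2 * \<tau> * \<sigma>" using tau_pos sigma by simp
    have b1: "(norm (z 1 - w))\<^sup>2 / (2 * \<tau> * \<sigma>) \<le> (norm (z 1) + \<rho>)\<^sup>2 / (2 * \<tau> * \<sigma>)"
    proof -
      have "norm (z 1 - w) \<le> norm (z 1) + \<rho>" using norm_triangle_ineq4[of "z 1" w] uvw(3) by linarith
      hence "(norm (z 1 - w))\<^sup>2 \<le> (norm (z 1) + \<rho>)\<^sup>2" by (rule sq_bound)
      thus ?thesis using ts by (simp add: divide_right_mono)
    qed
    have b2: "qnorm Gf (u - x 1) / 2 \<le> Kf * (\<rho> + norm (x 1))\<^sup>2 / 2"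
    proof -
      have "norm (u - x 1) \<le> \<rho> + norm (x 1)" using norm_triangle_ineq4[of u "x 1"] uvw(1) by linarith
      hence "(norm (u - x 1))\<^sup>2 \<le> (\<rho> + norm (x 1))\<^sup>2" by (rule sq_bound)
      hence "Kf * (norm (u - x 1))\<^sup>2 \<le> Kf * (\<rho> + norm (x 1))\<^sup>2" using Kf(1) by simp
      thus ?thesis using Kf(2)[of "u - x 1"] by simp
    qed
    have b3: "qnorm Gg (v - y 1) / 2 \<le> Kg * (\<rho> + norm (y 1))\<^sup>2 / 2"
    proof -
      have "norm (v - y 1) \<le> \<rho> + norm (y 1)" using norm_triangle_ineq4[of v "y 1"] uvw(2) by linarith
      hence "(norm (v - y 1))\<^sup>2 \<le> (\<rho> + norm (y 1))\<^sup>2" by (rule sq_bound)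
      hence "Kg * (norm (v - y 1))\<^sup>2 \<le> Kg * (\<rho> + norm (y 1))\<^sup>2" using Kg(1) by simp
      thus ?thesis using Kg(2)[of "v - y 1"] by simp
    qed
    have b4: "\<sigma> / 2 * (norm (At u + Bt (y 1) - c))\<^sup>2 \<le> \<sigma> / 2 * (KA * \<rho> + norm (Bt (y 1) - c))\<^sup>2"
    proof -
      have "norm (At u + Bt (y 1) - c) \<le> norm (At u) + norm (Bt (y 1) - c)"
        using norm_triangle_ineq[of "At u" "Bt (y 1) - c"] by (simp add: algebra_simps)
      also have "\<dots> \<le> KA * \<rho> + norm (Bt (y 1) - c)"
        using KA(2)[of u] mult_left_mono[OF uvw(1), of KA] KA(1) by linarith
      finally have "(norm (At u + Bt (y 1) - c))\<^sup>2 \<le> (KA * \<rho> + norm (Bt (y 1) - c))\<^sup>2" by (rule sq_bound)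
      thus ?thesis using sigma by simp
    qed
    show "Psi 0 u v w \<le> C" unfolding Psi_def C_def using b1 b2 b3 b4 by simp
  qed
qed


lemma main:
  shows "\<exists>D\<ge>0. \<forall>k\<ge>2. \<forall>u v w.
    (let xh = (1 / real k) *\<^sub>R (\<Sum>i=1..k. x (Suc i));
         yh = (1 / real k) *\<^sub>R (\<Sum>i=1..k. y (Suc i));
         zh = (1 / real k) *\<^sub>R (\<Sum>i=1..k. z i + \<sigma> *\<^sub>R (adjoint A (x (Suc i)) + adjoint B (y (Suc i)) - c))
     in norm ((u, v, w) - (xh, yh, zh)) \<le> 1 \<longrightarrow>
        p xh + q yh + ereal ((xh - u) \<bullet> (gf u + A w) + (yh - v) \<bullet> (gg v + B w)
                             + (zh - w) \<bullet> (- (adjoint A u + adjoint B v - c)))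
        \<le> p u + q v + ereal (D / (2 * real k)))"
proof -
  obtain R where Rx: "\<And>k. norm (x k) \<le> R" and Ry: "\<And>k. norm (y k) \<le> R"
    and Rz: "\<And>k. norm (z k) \<le> R" and Rr: "\<And>k. norm (r k) \<le> R"
    using bounded_iter by blast
  have R0: "0 \<le> R" using Rx[of 0] norm_ge_zero order_trans by blast
  define \<rho> where "\<rho> = (1 + \<sigma>) * R + 1"
  obtain C where Cb: "\<And>u v w. norm u \<le> \<rho> \<Longrightarrow> norm v \<le> \<rho> \<Longrightarrow> norm w \<le> \<rho> \<Longrightarrow> Psi 0 u v w \<le> C"
    using Psi0_bound by blast
  define D where "D = 2 * max C 0"
  show ?thesis
  proof (intro exI[of _ D] conjI allI impI)
    show "0 \<le> D" by (simp add: D_def)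
    fix k :: nat and u :: 'a and v :: 'b and w :: 'c
    assume k2: "2 \<le> k"
    define I where "I = {1..k}"
    have fI: "finite I" and cI: "card I = k" and kp: "0 < k" using k2 by (auto simp: I_def)
    have kr: "0 < real k" using kp by simp
    define xh where "xh = (1 / real k) *\<^sub>R (\<Sum>i=1..k. x (Suc i))"
    define yh where "yh = (1 / real k) *\<^sub>R (\<Sum>i=1..k. y (Suc i))"
    define zh where "zh = (1 / real k) *\<^sub>R (\<Sum>i=1..k. z i + \<sigma> *\<^sub>R (At (x (Suc i)) + Bt (y (Suc i)) - c))"
    show "let xh = (1 / real k) *\<^sub>R (\<Sum>i=1..k. x (Suc i));
         yh = (1 / real k) *\<^sub>R (\<Sum>i=1..k. y (Suc i));
         zh = (1 / real k) *\<^sub>R (\<Sum>i=1..k. z i + \<sigma> *\<^sub>R (At (x (Suc i)) + Bt (y (Suc i)) - c))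
     in norm ((u, v, w) - (xh, yh, zh)) \<le> 1 \<longrightarrow>
        p xh + q yh + ereal ((xh - u) \<bullet> (gf u + A w) + (yh - v) \<bullet> (gg v + B w)
                             + (zh - w) \<bullet> (- (At u + Bt v - c)))
        \<le> p u + q v + ereal (D / (2 * real k))"
      unfolding Let_def xh_def[symmetric] yh_def[symmetric] zh_def[symmetric]
    proof
      assume nrm: "norm ((u, v, w) - (xh, yh, zh)) \<le> 1"
      show "p xh + q yh + ereal ((xh - u) \<bullet> (gf u + A w) + (yh - v) \<bullet> (gg v + B w)
                             + (zh - w) \<bullet> (- (At u + Bt v - c))) \<le> p u + q v + ereal (D / (2 * real k))"
      proof -
        have d1: "norm (u - xh) \<le> 1" and d2: "norm (v - yh) \<le> 1" and d3: "norm (w - zh) \<le> 1"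
        proof -
          have e: "(u, v, w) - (xh, yh, zh) = (u - xh, (v - yh, w - zh))" by simp
          show "norm (u - xh) \<le> 1" using nrm norm_fst_le[of "u - xh" "(v - yh, w - zh)"] unfolding e by linarith
          have "norm (v - yh, w - zh) \<le> 1" using nrm norm_snd_le[of "(v - yh, w - zh)" "u - xh"] unfolding e by linarith
          thus "norm (v - yh) \<le> 1" "norm (w - zh) \<le> 1"
            using norm_fst_le[of "v - yh" "w - zh"] norm_snd_le[of "w - zh" "v - yh"] by linarith+
        qed
        have zsum: "(\<Sum>i=1..k. z i + \<sigma> *\<^sub>R (At (x (Suc i)) + Bt (y (Suc i)) - c)) = (\<Sum>i\<in>I. zt i)"
          by (simp add: I_def zt_def r_def)
        have avgb: "norm ((1 / real k) *\<^sub>R (\<Sum>i\<in>I. a i)) \<le> K" if "\<And>i. norm (a i) \<le> K" for a :: "nat \<Rightarrow> 'd::real_normed_vector" and K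
        proof -
          have "norm (\<Sum>i\<in>I. a i) \<le> (\<Sum>i\<in>I. norm (a i))" by (rule norm_sum)
          also have "\<dots> \<le> real (card I) * K" using sum_bounded_above[of I "\<lambda>i. norm (a i)" K] that by simp
          finally have "norm (\<Sum>i\<in>I. a i) \<le> real k * K" using cI by simp
          thus ?thesis using kr by (simp add: field_simps)
        qed
        have nxh: "norm xh \<le> R" unfolding xh_def I_def[symmetric] by (rule avgb) (rule Rx)
        have nyh: "norm yh \<le> R" unfolding yh_def I_def[symmetric] by (rule avgb) (rule Ry)
        have nzh: "norm zh \<le> (1 + \<sigma>) * R"
          unfolding zh_def zsum
        proof (rule avgb)
          fix i
          have "norm (zt i) \<le> norm (z i) + norm (\<sigma> *\<^sub>R r (Suc i))" unfolding zt_def by (rule norm_triangle_ineq)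
          also have "\<dots> \<le> R + \<sigma> * R"
          proof -
            have "\<sigma> * norm (r (Suc i)) \<le> \<sigma> * R" using Rr[of "Suc i"] sigma by (simp add: mult_left_mono)
            moreover have "norm (\<sigma> *\<^sub>R r (Suc i)) = \<sigma> * norm (r (Suc i))" using sigma by simp
            ultimately show ?thesis using Rz[of i] by linarith
          qed
          finally show "norm (zt i) \<le> (1 + \<sigma>) * R" by (simp add: algebra_simps)
        qed
        have sR: "0 \<le> \<sigma> * R" using sigma R0 by simp
        have tu: "norm u \<le> norm xh + norm (u - xh)" by (metis norm_triangle_sub add.commute)
        have tv: "norm v \<le> norm yh + norm (v - yh)" by (metis norm_triangle_sub add.commute)
        have tw: "norm w \<le> norm zh + norm (w - zh)" by (metis norm_triangle_sub add.commute)
        have rho: "\<rho> = R + \<sigma> * R + 1" by (simp add: \<rho>_def algebra_simps)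
        have nu: "norm u \<le> \<rho>" using tu d1 nxh sR unfolding rho by linarith
        have nv: "norm v \<le> \<rho>" using tv d2 nyh sR unfolding rho by linarith
        have nw: "norm w \<le> \<rho>" using tw d3 nzh unfolding \<rho>_def by linarith
        have CC: "Psi 0 u v w \<le> C" using Cb[OF nu nv nw] .
        show ?thesis
        proof (cases "u \<in> edom p \<and> v \<in> edom q")
          case False
          have inf: "p u + q v + ereal (D / (2 * real k)) = \<infinity>"
          proof (cases "u \<in> edom p")
            case True
            hence "q v = \<infinity>" using False by (simp add: edom_def top.not_eq_extremum)
            thus ?thesis using cpc_not_minf[OF p, of u] by simp
          next
            case False
            hence "p u = \<infinity>" by (simp add: edom_def top.not_eq_extremum)
            thus ?thesis using cpc_not_minf[OF q, of v] by simp
          qed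
          show ?thesis unfolding inf by simp
        next
          case True
          hence u: "u \<in> edom p" and v: "v \<in> edom q" by auto
          have sI: "(\<Sum>i\<in>I. 1 / real k) = 1" using cI kr by simp
          have Ine: "I \<noteq> {}" using cI kp by auto
          have xhs: "xh = (\<Sum>i\<in>I. (1 / real k) *\<^sub>R x (Suc i))" by (simp add: xh_def I_def scaleR_sum_right)
          have yhs: "yh = (\<Sum>i\<in>I. (1 / real k) *\<^sub>R y (Suc i))" by (simp add: yh_def I_def scaleR_sum_right)
          have cdp: "convex (edom p)" "convex (edom q)" using convP convQ by (auto simp: convex_on_def)
          have xhd: "xh \<in> edom p" unfolding xhs using convex_sum[OF fI cdp(1) sI] x_dom kr by simp
          have yhd: "yh \<in> edom q" unfolding yhs using convex_sum[OF fI cdp(2) sI] y_dom kr by simp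
          have Pxh: "P xh \<le> (\<Sum>i\<in>I. 1 / real k * P (x (Suc i)))"
            unfolding xhs by (rule convex_on_sum[OF fI Ine convP sI]) (use kr x_dom in auto)
          have Qyh: "Q yh \<le> (\<Sum>i\<in>I. 1 / real k * Q (y (Suc i)))"
            unfolding yhs by (rule convex_on_sum[OF fI Ine convQ sI]) (use kr y_dom in auto)
          define lin where "lin i = (x (Suc i) - u) \<bullet> (gf u + A w) + (y (Suc i) - v) \<bullet> (gg v + B w)
              + (zt i - w) \<bullet> (- (At u + Bt v - c))" for i
          have linavg: "(xh - u) \<bullet> (gf u + A w) + (yh - v) \<bullet> (gg v + B w) + (zh - w) \<bullet> (- (At u + Bt v - c))
              = 1 / real k * (\<Sum>i\<in>I. lin i)"
          proof -
            have a1: "(xh - u) \<bullet> (gf u + A w) = 1 / real k * (\<Sum>i\<in>I. (x (Suc i) - u) \<bullet> (gf u + A w))"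
              unfolding xh_def I_def[symmetric] by (rule avg_inner[OF fI cI kp])
            have a2: "(yh - v) \<bullet> (gg v + B w) = 1 / real k * (\<Sum>i\<in>I. (y (Suc i) - v) \<bullet> (gg v + B w))"
              unfolding yh_def I_def[symmetric] by (rule avg_inner[OF fI cI kp])
            have a3: "(zh - w) \<bullet> (- (At u + Bt v - c)) = 1 / real k * (\<Sum>i\<in>I. (zt i - w) \<bullet> (- (At u + Bt v - c)))"
              unfolding zh_def zsum by (rule avg_inner[OF fI cI kp])
            show ?thesis unfolding a1 a2 a3 lin_def by (simp add: sum.distrib distrib_left)
          qed
          have gi: "Gap i u v w = (P (x (Suc i)) + Q (y (Suc i)) + lin i) - (P u + Q v)" for i
            by (simp add: Gap_def lin_def)
          have SG: "(\<Sum>i\<in>I. Gap i u v w) = (\<Sum>i\<in>I. P (x (Suc i))) + (\<Sum>i\<in>I. Q (y (Suc i))) + (\<Sum>i\<in>I. lin i) - real k * (P u + Q v)"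
            unfolding gi using cI by (simp add: sum_subtractf sum.distrib)
          have SGb: "(\<Sum>i\<in>I. Gap i u v w) \<le> max C 0"
          proof -
            have "(\<Sum>i\<in>I. Gap i u v w) = (\<Sum>j<k. Gap (Suc j) u v w)"
              unfolding I_def by (simp add: sum.atLeast1_atMost_eq)
            also have "\<dots> \<le> Psi 0 u v w - Psi k u v w" by (rule telescope[OF u v])
            also have "\<dots> \<le> C" using CC Psi_nonneg[of k u v w] by linarith
            finally show ?thesis by simp
          qed
          have fin: "P xh + Q yh + ((xh - u) \<bullet> (gf u + A w) + (yh - v) \<bullet> (gg v + B w) + (zh - w) \<bullet> (- (At u + Bt v - c)))
               \<le> P u + Q v + D / (2 * real k)"
          proof -
            have e1: "(\<Sum>i\<in>I. 1 / real k * P (x (Suc i))) = 1 / real k * (\<Sum>i\<in>I. P (x (Suc i)))" by (simp add: sum_distrib_left)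
            have e2: "(\<Sum>i\<in>I. 1 / real k * Q (y (Suc i))) = 1 / real k * (\<Sum>i\<in>I. Q (y (Suc i)))" by (simp add: sum_distrib_left)
            have m: "1 / real k * (\<Sum>i\<in>I. Gap i u v w) \<le> 1 / real k * max C 0" using SGb kr by (intro mult_left_mono) auto
            have e3: "1 / real k * (\<Sum>i\<in>I. Gap i u v w) = 1 / real k * (\<Sum>i\<in>I. P (x (Suc i))) + 1 / real k * (\<Sum>i\<in>I. Q (y (Suc i)))
                  + 1 / real k * (\<Sum>i\<in>I. lin i) - (P u + Q v)"
              unfolding SG using kr by (simp add: field_simps)
            have e4: "D / (2 * real k) = 1 / real k * max C 0" by (simp add: D_def)
            show ?thesis using Pxh Qyh e1 e2 m e3 e4 linavg by argo
          qed
          show ?thesis using fin pP[OF xhd] qQ[OF yhd] pP[OF u] qQ[OF v] by simp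
        qed
      qed
    qed
  qed
qed

end

theorem theorem5p3:
  fixes p :: "'a::euclidean_space \<Rightarrow> ereal" and q :: "'b::euclidean_space \<Rightarrow> ereal"
    and f :: "'a \<Rightarrow> real" and g :: "'b \<Rightarrow> real"
    and gf :: "'a \<Rightarrow> 'a" and gg :: "'b \<Rightarrow> 'b"
    and A :: "'c::euclidean_space \<Rightarrow> 'a" and B :: "'c \<Rightarrow> 'b" and c :: 'c
    and Sf Sfh S :: "'a \<Rightarrow> 'a" and Sg Sgh T :: "'b \<Rightarrow> 'b"
    and \<sigma> \<tau> \<alpha> :: real
    and x :: "nat \<Rightarrow> 'a" and y :: "nat \<Rightarrow> 'b" and z :: "nat \<Rightarrow> 'c"
  assumes p: "closed_proper_convex p" and q: "closed_proper_convex q"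
    and f_cvx: "convex_on UNIV f" and f_grad: "\<And>u. (f has_derivative (\<lambda>h. gf u \<bullet> h)) (at u)"
    and f_lip: "\<exists>L. \<forall>u v. norm (gf u - gf v) \<le> L * norm (u - v)"
    and g_cvx: "convex_on UNIV g" and g_grad: "\<And>u. (g has_derivative (\<lambda>h. gg u \<bullet> h)) (at u)"
    and g_lip: "\<exists>L. \<forall>u v. norm (gg u - gg v) \<le> L * norm (u - v)"
    and linA: "linear A" and linB: "linear B"
    and CQ: "\<exists>x0 y0. (x0, y0) \<in> rel_interior (edom p \<times> edom q) \<and> adjoint A x0 + adjoint B y0 = c"
    and sol: "\<exists>xs ys. adjoint A xs + adjoint B ys = c \<and>
               (\<forall>x' y'. adjoint A x' + adjoint B y' = c \<longrightarrow>
                  p xs + ereal (f xs) + q ys + ereal (g ys) \<le> p x' + ereal (f x') + q y' + ereal (g y'))"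
    and ops: "self_adjoint_op Sf" "self_adjoint_op Sfh" "self_adjoint_op Sg" "self_adjoint_op Sgh"
             "self_adjoint_op S" "self_adjoint_op T"
    and Sig_psd: "psd_op Sf" "psd_op Sg" "psd_op (\<lambda>u. Sfh u - Sf u)" "psd_op (\<lambda>u. Sgh u - Sg u)"
    and f_maj: "\<And>u v. f v + (u - v) \<bullet> gf v + qnorm Sf (u - v) / 2 \<le> f u"
               "\<And>u v. f u \<le> f v + (u - v) \<bullet> gf v + qnorm Sfh (u - v) / 2"
    and g_maj: "\<And>u v. g v + (u - v) \<bullet> gg v + qnorm Sg (u - v) / 2 \<le> g u"
               "\<And>u v. g u \<le> g v + (u - v) \<bullet> gg v + qnorm Sgh (u - v) / 2"
    and sigma: "\<sigma> > 0" and tau_pos: "\<tau> > 0"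
    and alg_psd: "psd_op (\<lambda>u. Sfh u + S u + \<sigma> *\<^sub>R A (adjoint A u))"
                 "psd_op (\<lambda>u. Sgh u + T u + \<sigma> *\<^sub>R B (adjoint B u))"
    and init: "x 0 \<in> edom p" "y 0 \<in> edom q"
    and xstep: "\<And>k u.
      p (x (Suc k)) + ereal (gf (x k) \<bullet> x (Suc k) + qnorm (\<lambda>v. Sfh v + S v) (x (Suc k) - x k) / 2
        + z k \<bullet> adjoint A (x (Suc k)) + \<sigma> / 2 * (norm (adjoint A (x (Suc k)) + adjoint B (y k) - c))\<^sup>2)
      \<le> p u + ereal (gf (x k) \<bullet> u + qnorm (\<lambda>v. Sfh v + S v) (u - x k) / 2
        + z k \<bullet> adjoint A u + \<sigma> / 2 * (norm (adjoint A u + adjoint B (y k) - c))\<^sup>2)"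
    and ystep: "\<And>k v.
      q (y (Suc k)) + ereal (gg (y k) \<bullet> y (Suc k) + qnorm (\<lambda>w. Sgh w + T w) (y (Suc k) - y k) / 2
        + z k \<bullet> adjoint B (y (Suc k)) + \<sigma> / 2 * (norm (adjoint A (x (Suc k)) + adjoint B (y (Suc k)) - c))\<^sup>2)
      \<le> q v + ereal (gg (y k) \<bullet> v + qnorm (\<lambda>w. Sgh w + T w) (v - y k) / 2
        + z k \<bullet> adjoint B v + \<sigma> / 2 * (norm (adjoint A (x (Suc k)) + adjoint B v - c))\<^sup>2)"
    and zstep: "\<And>k. z (Suc k) = z k + (\<tau> * \<sigma>) *\<^sub>R (adjoint A (x (Suc k)) + adjoint B (y (Suc k)) - c)"
    and tau_ub: "\<tau> < (1 + sqrt 5) / 2"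
    and alpha: "\<tau> / min (1 + \<tau>) (1 + 1 / \<tau>) < \<alpha>" "\<alpha> \<le> 1"
    and c1: "psd_op (\<lambda>u. Sfh u + S u)"
    and c2: "psd_op (\<lambda>u. (1/2) *\<^sub>R Sf u + S u + ((1 - \<alpha>) * \<sigma> / 2) *\<^sub>R A (adjoint A u))"
    and c3: "pd_op (\<lambda>u. (1/2) *\<^sub>R Sf u + S u + \<sigma> *\<^sub>R A (adjoint A u))"
    and c4: "psd_op (\<lambda>v. (1/2) *\<^sub>R Sgh v + T v)"
    and c5: "pd_op (\<lambda>v. (1/2) *\<^sub>R Sg v + T v + (min \<tau> (1 + \<tau> - \<tau>\<^sup>2) * \<alpha> * \<sigma>) *\<^sub>R B (adjoint B v))"
  shows "\<exists>D\<ge>0. \<forall>k\<ge>2. \<forall>u v w.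
    (let xh = (1 / real k) *\<^sub>R (\<Sum>i=1..k. x (Suc i));
         yh = (1 / real k) *\<^sub>R (\<Sum>i=1..k. y (Suc i));
         zh = (1 / real k) *\<^sub>R (\<Sum>i=1..k. z i + \<sigma> *\<^sub>R (adjoint A (x (Suc i)) + adjoint B (y (Suc i)) - c))
     in norm ((u, v, w) - (xh, yh, zh)) \<le> 1 \<longrightarrow>
        p xh + q yh + ereal ((xh - u) \<bullet> (gf u + A w) + (yh - v) \<bullet> (gg v + B w)
                             + (zh - w) \<bullet> (- (adjoint A u + adjoint B v - c)))
        \<le> p u + q v + ereal (D / (2 * real k)))"
proof -
  interpret admm p q f g gf gg A B c Sf Sfh S Sg Sgh T \<sigma> \<tau> \<alpha> x y z
    by (rule admm.intro) (rule assms)+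
  show ?thesis by (rule main)
qed

end
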